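(* Let $\kappa>0$, $\epsilon>0$, and let $\theta_\epsilon$ be the phase function of a rescaled Néel wall. Then $\theta_\epsilon$ is smooth and: (i) $\theta_\epsilon(0)=0$, $\theta_\epsilon'\ge 0$ on $\mathbb{R}$, and $\theta_\epsilon'(0)>0$; (ii) $\theta_\epsilon'\in H^k(\mathbb{R})$ and $\cos\theta_\epsilon\in H^k(\mathbb{R})$ for all $k\in\mathbb{N}$; (iii) $-\frac{\pi}{2}\le\theta_\epsilon\le\frac{\pi}{2}$ and $\lim_{x\to\pm\infty}\theta_\epsilon(x)=\pm\frac{\pi}{2}$.
   Context: Fix $\kappa>0$, $\epsilon>0$. Let $\mathcal{S}_\epsilon[f]=\mathcal{F}^{-1}(\sigma_\epsilon\widehat f)$ with $\sigma_\epsilon(\xi)=1-\frac{1-e^{-\epsilon|\xi|}}{\epsilon|\xi|}$ and $\widehat u(\xi)=(2\pi)^{-1/2}\int e^{-ix\xi}u(x)\,dx$. A rescaled Néel wall is a minimizer $m_\epsilon=(m_1^\epsilon,m_2^\epsilon)$ of $E^\epsilon(m)=\kappa\int|m'|^2+\int m_1^2+\frac1\epsilon\int \mathcal{S}_\epsilon[m_1]m_1$ over the admissible set $\{m:\mathbb{R}\to S^1:\ m'\in L^2,\ m_1\in L^2,\ m_1(0)=1,\ \lim_{x\to\pm\infty}m_2(x)=\pm1\}$ (such minimizers exist). Standing facts used (from the literature): rescaled Néel walls are smooth weak solutions of the associated Euler–Lagrange equation, $m_1^\epsilon$ and $(m_2^\epsilon)'$ lie in $H^k$ for all $k$, and $m_1^\epsilon$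 is nonnegative and symmetrically decreasing. The phase function $\theta_\epsilon:\mathbb{R}\to\mathbb{R}$ is the smooth function with $\theta_\epsilon(0)=0$ and $m_\epsilon=(\cos\theta_\epsilon,\sin\theta_\epsilon)$; it solves $\kappa\theta''+\frac12\sin(2\theta)+\frac1\epsilon\mathcal{S}_\epsilon[\cos\theta]\sin\theta=0$. *)

theory Defs
  imports "HOL-Analysis.Analysis"
begin

definition L2 :: "(real \<Rightarrow> real) \<Rightarrow> bool" where
  "L2 f \<longleftrightarrow> f \<in> borel_measurable lborel \<and> integrable lborel (\<lambda>x. (f x)^2)"

definition L2c :: "(real \<Rightarrow> complex) \<Rightarrow> bool" where
  "L2c f \<longleftrightarrow> f \<in> borel_measurable lborel \<and> integrable lborel (\<lambda>x. (cmod (f x))^2)"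

definition smooth :: "(real \<Rightarrow> real) \<Rightarrow> bool" where
  "smooth f \<longleftrightarrow> (\<forall>n x. ((deriv ^^ n) f) differentiable (at x))"

definition test_fun :: "(real \<Rightarrow> real) \<Rightarrow> bool" where
  "test_fun \<phi> \<longleftrightarrow> smooth \<phi> \<and> bounded {x. \<phi> x \<noteq> 0}"

definition sobolev :: "nat \<Rightarrow> (real \<Rightarrow> real) \<Rightarrow> bool" where
  "sobolev k f \<longleftrightarrow>
     (\<exists>g :: nat \<Rightarrow> real \<Rightarrow> real.
        (\<forall>j\<le>k. L2 (g j)) \<and>
        (AE x in lborel. g 0 x = f x) \<and>
        (\<forall>j\<le>k. \<forall>\<phi>. test_fun \<phi> \<longrightarrow>
           (LINT x|lborel. g j x * \<phi> x) = (-1)^j * (LINT x|lborel. f x * (deriv ^^ j) \<phi> x)))"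

definition fourier_trunc :: "(real \<Rightarrow> complex) \<Rightarrow> real \<Rightarrow> real \<Rightarrow> complex" where
  "fourier_trunc f R \<xi> =
     complex_of_real (1 / sqrt (2 * pi)) *
       (LINT x:{-R..R}|lborel. exp (- \<i> * complex_of_real (x * \<xi>)) * f x)"

definition fourier_L2 :: "(real \<Rightarrow> complex) \<Rightarrow> (real \<Rightarrow> complex) \<Rightarrow> bool" where
  "fourier_L2 f g \<longleftrightarrow> L2c f \<and> L2c g \<and>
     ((\<lambda>R. LINT \<xi>|lborel. (cmod (fourier_trunc f R \<xi> - g \<xi>))^2) \<longlongrightarrow> 0) at_top"

definition sigma_eps :: "real \<Rightarrow> real \<Rightarrow> real" where
  "sigma_eps \<epsilon> \<xi> = (if \<xi> = 0 then 0 else 1 - (1 - exp (- \<epsilon> * \<bar>\<xi>\<bar>)) / (\<epsilon> * \<bar>\<xi>\<bar>))"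

text \<open>h = S_eps[f] = F^{-1}(sigma_eps * F f)  (determined up to null sets).\<close>
definition S_op :: "real \<Rightarrow> (real \<Rightarrow> real) \<Rightarrow> (real \<Rightarrow> complex) \<Rightarrow> bool" where
  "S_op \<epsilon> f h \<longleftrightarrow> (\<exists>g. fourier_L2 (\<lambda>x. complex_of_real (f x)) g \<and>
                        fourier_L2 h (\<lambda>\<xi>. complex_of_real (sigma_eps \<epsilon> \<xi>) * g \<xi>))"

text \<open>Admissible m = (m1, m2) : R -> S^1, with (weak) derivative d in L^2 (m is the
  integral of d), m1 in L^2, m1(0) = 1, m2(+-infinity) = +-1.\<close>
definition admissible :: "(real \<Rightarrow> real \<times> real) \<Rightarrow> (real \<Rightarrow> real \<times> real) \<Rightarrow> bool" where
  "admissible m d \<longleftrightarrow>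
     (\<forall>x. (fst (m x))^2 + (snd (m x))^2 = 1) \<and>
     L2 (\<lambda>x. fst (d x)) \<and> L2 (\<lambda>x. snd (d x)) \<and>
     (\<forall>a b. fst (m b) - fst (m a) = (LBINT t=a..b. fst (d t)) \<and>
            snd (m b) - snd (m a) = (LBINT t=a..b. snd (d t))) \<and>
     L2 (\<lambda>x. fst (m x)) \<and>
     fst (m 0) = 1 \<and>
     ((\<lambda>x. snd (m x)) \<longlongrightarrow> 1) at_top \<and>
     ((\<lambda>x. snd (m x)) \<longlongrightarrow> -1) at_bot"

definition nonlocal :: "real \<Rightarrow> (real \<Rightarrow> real) \<Rightarrow> real" where
  "nonlocal \<epsilon> f = (LINT x|lborel. Re ((SOME h. S_op \<epsilon> f h) x) * f x)"

definition energy :: "real \<Rightarrow> real \<Rightarrow> (real \<Rightarrow> real \<times> real) \<Rightarrow> (real \<Rightarrow> real \<times> real) \<Rightarrow> real" where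
  "energy \<kappa> \<epsilon> m d =
     \<kappa> * (LINT x|lborel. (norm (d x))^2) + (LINT x|lborel. (fst (m x))^2)
     + (1 / \<epsilon>) * nonlocal \<epsilon> (\<lambda>x. fst (m x))"

definition neel_wall :: "real \<Rightarrow> real \<Rightarrow> (real \<Rightarrow> real \<times> real) \<Rightarrow> bool" where
  "neel_wall \<kappa> \<epsilon> m \<longleftrightarrow>
     (\<exists>d. admissible m d \<and>
          (\<forall>m' d'. admissible m' d' \<longrightarrow> energy \<kappa> \<epsilon> m d \<le> energy \<kappa> \<epsilon> m' d'))"

end

theory Submission
  imports Defs "HOL-Computational_Algebra.Polynomial"
begin


lemma deriv_funpow_Suc: "(deriv ^^ Suc n) f = (deriv ^^ n) (deriv f)"
  by (simp add: funpow_Suc_right del: funpow.simps)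

lemma smooth_diffble: "smooth f \<Longrightarrow> f differentiable (at x)"
  unfolding smooth_def by (metis funpow_0)

lemma smooth_deriv: "smooth f \<Longrightarrow> smooth (deriv f)"
  unfolding smooth_def by (metis deriv_funpow_Suc)

lemma smooth_has_deriv: "smooth f \<Longrightarrow> (f has_real_derivative deriv f x) (at x)"
  using smooth_diffble DERIV_deriv_iff_real_differentiable by blast

lemma smooth_higher_has_deriv:
  "smooth f \<Longrightarrow> ((deriv ^^ n) f has_real_derivative (deriv ^^ Suc n) f x) (at x)"
proof -
  assume "smooth f"
  then have "(deriv ^^ n) f differentiable (at x)" unfolding smooth_def by blast
  then show ?thesis using DERIV_deriv_iff_real_differentiable by force
qed

lemma smooth_higher: "smooth f \<Longrightarrow> smooth ((deriv ^^ n) f)"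
  by (induction n) (auto intro: smooth_deriv)

lemma smooth_cont: "smooth f \<Longrightarrow> continuous_on S f"
  by (meson DERIV_isCont continuous_at_imp_continuous_on smooth_has_deriv)

lemma chain_higher:
  assumes "\<And>n x. (F n has_real_derivative F (Suc n) x) (at x)"
  shows "(deriv ^^ n) (F 0) = F n"
proof (induction n)
  case (Suc n)
  then have IH: "(deriv ^^ n) (F 0) = F n" by simp
  have "deriv (F n) = F (Suc n)" using DERIV_imp_deriv[OF assms] by (simp add: fun_eq_iff)
  then show ?case using IH by simp
qed simp

lemma chain_smooth:
  assumes "\<And>n x. (F n has_real_derivative F (Suc n) x) (at x)"
  shows "smooth (F 0)"
  unfolding smooth_def using chain_higher[of F] assms real_differentiable_def by metis

lemma smooth_chain_iff: "smooth f \<longleftrightarrow> (\<exists>F. F 0 = f \<and> (\<forall>n x. (F n has_real_derivative F (Suc n) x) (at x)))"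
proof
  assume "smooth f"
  then show "\<exists>F. F 0 = f \<and> (\<forall>n x. (F n has_real_derivative F (Suc n) x) (at x))"
    by (intro exI[of _ "\<lambda>n. (deriv ^^ n) f"]) (auto intro: smooth_higher_has_deriv[simplified])
next
  assume "\<exists>F. F 0 = f \<and> (\<forall>n x. (F n has_real_derivative F (Suc n) x) (at x))"
  then show "smooth f" using chain_smooth by blast
qed

lemma smooth_const: "smooth (\<lambda>x. c)"
  using chain_smooth[of "\<lambda>n x. if n = 0 then c else 0"] by auto

lemma smooth_add: assumes "smooth f" "smooth g" shows "smooth (\<lambda>x. f x + g x)"
proof -
  have "((\<lambda>x. (deriv ^^ n) f x + (deriv ^^ n) g x) has_real_derivative (deriv ^^ Suc n) f x + (deriv ^^ Suc n) g x) (at x)" for n x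
    using assms by (intro DERIV_add smooth_higher_has_deriv)
  from chain_smooth[of "\<lambda>n x. (deriv ^^ n) f x + (deriv ^^ n) g x", OF this] show ?thesis by simp
qed

lemma smooth_minus: assumes "smooth f" shows "smooth (\<lambda>x. - f x)"
proof -
  have "((\<lambda>x. - (deriv ^^ n) f x) has_real_derivative - (deriv ^^ Suc n) f x) (at x)" for n x
    using assms by (intro DERIV_minus smooth_higher_has_deriv)
  from chain_smooth[of "\<lambda>n x. - (deriv ^^ n) f x", OF this] show ?thesis by simp
qed

lemma smooth_diff: assumes "smooth f" "smooth g" shows "smooth (\<lambda>x. f x - g x)"
  using smooth_add[OF assms(1) smooth_minus[OF assms(2)]] by simp

lemma smooth_affine: assumes "smooth f" shows "smooth (\<lambda>x. f (a * x + b))"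
proof -
  have "((\<lambda>x. a ^ n * (deriv ^^ n) f (a * x + b)) has_real_derivative a ^ Suc n * (deriv ^^ Suc n) f (a * x + b)) (at x)" for n x
  proof -
    have "((\<lambda>x. a * x + b) has_real_derivative a) (at x)" by (auto intro!: derivative_eq_intros)
    from DERIV_chain2[OF smooth_higher_has_deriv[OF assms] this]
    show ?thesis by (auto intro!: derivative_eq_intros simp: algebra_simps)
  qed
  from chain_smooth[of "\<lambda>n x. a ^ n * (deriv ^^ n) f (a * x + b)", OF this] show ?thesis by simp
qed

lemma Suc_choose: "Suc n choose k = (n choose k) + (if k = 0 then 0 else (n choose (k-1)))"
  by (cases k) simp_all

lemma higher_deriv_mult_real:
  assumes "smooth f" "smooth g"
  shows "(deriv ^^ n) (\<lambda>w. f w * g w) z =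
           (\<Sum>i = 0..n. real (n choose i) * (deriv ^^ i) f z * (deriv ^^ (n-i)) g z)"
proof (induction n arbitrary: z)
  case 0 then show ?case by simp
next
  case (Suc n z)
  have *: "\<And>n. ((deriv ^^ n) f has_field_derivative deriv ((deriv ^^ n) f) z) (at z)"
          "\<And>n. ((deriv ^^ n) g has_field_derivative deriv ((deriv ^^ n) g) z) (at z)"
    using assms smooth_higher_has_deriv by auto
  have sumeq: "(\<Sum>i = 0..n.
               of_nat (n choose i) * (deriv ((deriv ^^ i) f) z * (deriv ^^ (n-i)) g z + deriv ((deriv ^^ (n-i)) g) z * (deriv ^^ i) f z)) =
            g z * deriv ((deriv ^^ n) f) z + (\<Sum>i = 0..n. (deriv ^^ i) f z * (of_nat (Suc n choose i) * (deriv ^^ (Suc n - i)) g z))"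
    apply (simp add: Suc_choose algebra_simps sum.distrib)
    apply (subst (4) sum_Suc_reindex)
    apply (auto simp: algebra_simps Suc_diff_le intro: sum.cong)
    done
  have "((deriv ^^ n) (\<lambda>w. f w * g w) has_field_derivative
         (\<Sum>i = 0..Suc n. (Suc n choose i) * (deriv ^^ i) f z * (deriv ^^ (Suc n - i)) g z))
        (at z)"
    apply (rule has_field_derivative_transform_within_open
        [of "\<lambda>w. (\<Sum>i = 0..n. of_nat (n choose i) * (deriv ^^ i) f w * (deriv ^^ (n-i)) g w)" _ _ UNIV])
       apply (simp add: algebra_simps)
       apply (rule derivative_eq_intros | simp)+
           apply (auto intro: DERIV_mult * Suc.IH [symmetric])
    by (metis (no_types, lifting) mult.commute sum.cong sumeq)
  then show ?case
    unfolding funpow.simps o_apply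
    by (simp add: DERIV_imp_deriv)
qed

lemma smooth_mult: assumes "smooth f" "smooth g" shows "smooth (\<lambda>x. f x * g x)"
  unfolding smooth_def
proof (intro allI)
  fix n x
  have "(\<lambda>z. \<Sum>i = 0..n. real (n choose i) * (deriv ^^ i) f z * (deriv ^^ (n-i)) g z) differentiable (at x)"
    using assms unfolding smooth_def by (intro differentiable_sum ballI differentiable_mult differentiable_const) auto
  moreover have "(deriv ^^ n) (\<lambda>w. f w * g w) = (\<lambda>z. \<Sum>i = 0..n. real (n choose i) * (deriv ^^ i) f z * (deriv ^^ (n-i)) g z)"
    using higher_deriv_mult_real[OF assms] by auto
  ultimately show "(deriv ^^ n) (\<lambda>x. f x * g x) differentiable (at x)" by simp
qed

lemma smooth_from_deriv:
  assumes "\<And>x. (f has_real_derivative g x) (at x)" and "smooth g"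
  shows "smooth f"
proof -
  define F where "F = (\<lambda>n. case n of 0 \<Rightarrow> f | Suc m \<Rightarrow> (deriv ^^ m) g)"
  have "(F n has_real_derivative F (Suc n) x) (at x)" for n x
    using assms smooth_higher_has_deriv[OF assms(2)] by (cases n) (auto simp: F_def simp del: funpow.simps)
  from chain_smooth[of F, OF this] show ?thesis by (simp add: F_def)
qed



lemma range_half_pi:
  fixes f :: "real \<Rightarrow> real"
  assumes cont: "continuous_on UNIV f" and f0: "f 0 = 0" and cpos: "\<And>x. cos (f x) \<ge> 0"
  shows "- (pi/2) \<le> f x \<and> f x \<le> pi/2"
proof (rule ccontr)
  have cc: "\<And>a b. continuous_on {a..b} f" by (rule continuous_on_subset[OF cont]) simp
  assume "\<not> (- (pi/2) \<le> f x \<and> f x \<le> pi/2)"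
  then consider "f x > pi/2" | "f x < - (pi/2)" by linarith
  then show False
  proof cases
    case 1
    define v where "v = (pi/2 + min (f x) pi) / 2"
    have v: "pi/2 < v" "v < 3*pi/2" "v \<le> f x" "0 \<le> v" using 1 pi_gt_zero unfolding v_def by (auto simp: min_def)
    have cv: "cos v < 0" using cos_lt_zero_pi v by auto
    have "\<exists>z. f z = v"
    proof (cases "0 \<le> x")
      case True
      from IVT'[of f 0 v x, OF _ _ True cc] show ?thesis using v f0 pi_gt_zero by auto
    next
      case False
      from IVT2'[of f 0 v x, OF _ _ _ cc] show ?thesis using False v f0 pi_gt_zero by auto
    qed
    then obtain z where "f z = v" by blast
    then show False using cpos[of z] cv by simp
  next
    case 2
    define v where "v = (- (pi/2) + max (f x) (- pi)) / 2"
    have v: "pi/2 < - v" "- v < 3*pi/2" "f x \<le> v" "v \<le> 0" using 2 pi_gt_zero unfolding v_def by (auto simp: max_def field_simps)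
    have cv: "cos v < 0" using cos_lt_zero_pi[of "-v"] v by auto
    have "\<exists>z. f z = v"
    proof (cases "0 \<le> x")
      case True
      from IVT2'[of f x v 0, OF _ _ True cc] show ?thesis using v f0 pi_gt_zero by auto
    next
      case False
      from IVT'[of f x v 0, OF _ _ _ cc] show ?thesis using False v f0 pi_gt_zero by auto
    qed
    then obtain z where "f z = v" by blast
    then show False using cpos[of z] cv by simp
  qed
qed

lemma half_mono:
  fixes f :: "real \<Rightarrow> real"
  assumes cont: "continuous_on UNIV f" and f0: "f 0 = 0"
    and rng: "\<And>x. - (pi/2) \<le> f x \<and> f x \<le> pi/2"
    and anti: "\<And>x y. 0 \<le> x \<Longrightarrow> x \<le> y \<Longrightarrow> cos (f y) \<le> cos (f x)"
    and lim: "((\<lambda>x. sin (f x)) \<longlongrightarrow> 1) at_top"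
  shows "\<And>x. 0 \<le> x \<Longrightarrow> 0 \<le> f x" and "\<And>x y. 0 \<le> x \<Longrightarrow> x \<le> y \<Longrightarrow> f x \<le> f y"
proof -
  have cabs: "cos (f x) = cos \<bar>f x\<bar>" for x
  proof (cases "0 \<le> f x")
    case True then show ?thesis by simp
  next
    case False then have "\<bar>f x\<bar> = - f x" by simp
    then show ?thesis by simp
  qed
  have absle: "\<bar>f x\<bar> \<le> \<bar>f y\<bar>" if "0 \<le> x" "x \<le> y" for x y
  proof -
    have "cos \<bar>f y\<bar> \<le> cos \<bar>f x\<bar>" using anti[OF that] cabs[of x] cabs[of y] by linarith
    moreover have "\<bar>f x\<bar> \<le> pi" "\<bar>f y\<bar> \<le> pi" using rng[of x] rng[of y] pi_gt_zero by linarith+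
    ultimately show ?thesis using cos_mono_le_eq[of "\<bar>f y\<bar>" "\<bar>f x\<bar>"] by simp
  qed
  show nn: "0 \<le> f x" if "0 \<le> x" for x
  proof (rule ccontr)
    assume neg: "\<not> 0 \<le> f x"
    have "f y < 0" if "x \<le> y" for y
    proof (rule ccontr)
      assume "\<not> f y < 0"
      have cc: "continuous_on {x..y} f" by (rule continuous_on_subset[OF cont]) simp
      have "f x \<le> 0" "0 \<le> f y" using neg \<open>\<not> f y < 0\<close> by auto
      from IVT'[of f x 0 y, OF this \<open>x \<le> y\<close> cc] obtain z where "x \<le> z" "z \<le> y" "f z = 0"
        by blast
      then show False using absle[of x z] \<open>0 \<le> x\<close> neg by auto
    qed
    then have "eventually (\<lambda>y. sin (f y) \<le> 0) at_top"
      unfolding eventually_at_top_linorder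
    proof (intro exI allI impI)
      fix y assume "x \<le> y"
      then have "f y < 0" by fact
      then have "0 \<le> sin (- f y)" using rng[of y] by (intro sin_ge_zero) auto
      then show "sin (f y) \<le> 0" by simp
    qed
    from tendsto_upperbound[OF lim this] have "1 \<le> (0::real)" by simp
    then show False by simp
  qed
  show "f x \<le> f y" if "0 \<le> x" "x \<le> y" for x y
    using absle[OF that] nn[of x] nn[of y] that by auto
qed



lemma theta_deriv:
  fixes \<theta> :: "real \<Rightarrow> real"
  assumes cont: "continuous_on UNIV \<theta>"
    and rng: "\<And>x. - (pi/2) \<le> \<theta> x \<and> \<theta> x \<le> pi/2"
    and smC: "smooth (\<lambda>x. cos (\<theta> x))" and smS: "smooth (\<lambda>x. sin (\<theta> x))"
  shows "(\<theta> has_real_derivative (cos (\<theta> x) * deriv (\<lambda>x. sin (\<theta> x)) x - sin (\<theta> x) * deriv (\<lambda>x. cos (\<theta> x)) x)) (at x)"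
proof -
  define C where "C = (\<lambda>x. cos (\<theta> x))"
  define S where "S = (\<lambda>x. sin (\<theta> x))"
  have dC: "(C has_real_derivative deriv C y) (at y)" for y using smC smooth_has_deriv C_def by blast
  have dS: "(S has_real_derivative deriv S y) (at y)" for y using smS smooth_has_deriv S_def by blast
  have id: "C y * deriv C y + S y * deriv S y = 0" for y
  proof -
    have "((\<lambda>y. C y * C y + S y * S y) has_real_derivative deriv C y * C y + C y * deriv C y + (deriv S y * S y + S y * deriv S y)) (at y)"
      using DERIV_add[OF DERIV_mult[OF dC dC] DERIV_mult[OF dS dS]] by simp
    moreover have "(\<lambda>y. C y * C y + S y * S y) = (\<lambda>y. 1)"
      unfolding C_def S_def by (auto simp: fun_eq_iff)
    ultimately have "((\<lambda>y. 1::real) has_real_derivative deriv C y * C y + C y * deriv C y + (deriv S y * S y + S y * deriv S y)) (at y)" by simp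
    from DERIV_unique[OF this DERIV_const] show ?thesis by simp
  qed
  have ss: "(C y)^2 + (S y)^2 = 1" for y unfolding C_def S_def by simp
  have Cnn: "C y \<ge> 0" for y unfolding C_def using rng[of y] by (intro cos_ge_zero) auto
  let ?D = "C x * deriv S x - S x * deriv C x"
  consider "\<theta> x = 0" | "\<theta> x > 0" | "\<theta> x < 0" by linarith
  then have "(\<theta> has_real_derivative ?D) (at x)"
  proof cases
    case 1
    define U where "U = \<theta> -` {- (pi/2) <..< pi/2}"
    have U: "open U" "x \<in> U" unfolding U_def using 1 cont by (auto intro!: open_vimage)
    have Cx: "C x = 1" "S x = 0" using 1 C_def S_def by auto
    have "((\<lambda>y. arcsin (S y)) has_real_derivative inverse (sqrt (1 - (S x)\<^sup>2)) * deriv S x) (at x)"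
      by (rule DERIV_chain2[OF DERIV_arcsin dS]) (auto simp: Cx)
    then have "((\<lambda>y. arcsin (S y)) has_real_derivative ?D) (at x)"
      using id[of x] by (simp add: Cx)
    then show ?thesis
      by (rule has_field_derivative_transform_within_open[OF _ U]) (use rng in \<open>auto simp: U_def S_def arcsin_sin\<close>)
  next
    case 2
    define U where "U = \<theta> -` {0 <..}"
    have U: "open U" "x \<in> U" unfolding U_def using 2 cont by (auto intro!: open_vimage)
    have Sx: "S x > 0" unfolding S_def using 2 rng[of x] by (intro sin_gt_zero) auto
    have Cx: "C x < 1" 
    proof -
      have "C x < cos 0" unfolding C_def using 2 rng[of x] by (intro cos_monotone_0_pi) auto
      then show ?thesis by simp
    qed
    have sq: "sqrt (1 - (C x)\<^sup>2) = S x"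
    proof -
      have "1 - (C x)\<^sup>2 = (S x)\<^sup>2" using ss[of x] by simp
      then show ?thesis using Sx by simp
    qed
    have "((\<lambda>y. arccos (C y)) has_real_derivative inverse (- sqrt (1 - (C x)\<^sup>2)) * deriv C x) (at x)"
      by (rule DERIV_chain2[OF DERIV_arccos dC]) (use Cx Cnn[of x] in auto)
    moreover have "inverse (- sqrt (1 - (C x)\<^sup>2)) * deriv C x = ?D"
    proof -
      have "S x * ?D = C x * (S x * deriv S x) - (S x)^2 * deriv C x" by (simp add: algebra_simps power2_eq_square)
      also have "\<dots> = - ((C x)^2 + (S x)^2) * deriv C x"
      proof -
        have e1: "S x * deriv S x = - (C x * deriv C x)" using id[of x] by linarith
        show ?thesis unfolding e1 by (simp add: algebra_simps power2_eq_square)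
      qed
      also have "\<dots> = - deriv C x" using ss[of x] by simp
      finally have "S x * ?D = - deriv C x" .
      then show ?thesis using Sx sq by (simp add: field_simps)
    qed
    ultimately have "((\<lambda>y. arccos (C y)) has_real_derivative ?D) (at x)" by simp
    then show ?thesis
    proof (rule has_field_derivative_transform_within_open[OF _ U])
      fix y assume "y \<in> U"
      then have "0 \<le> \<theta> y" "\<theta> y \<le> pi" using rng[of y] by (auto simp: U_def)
      then show "arccos (C y) = \<theta> y" unfolding C_def using arccos_cos by simp
    qed
  next
    case 3
    define U where "U = \<theta> -` {..< 0}"
    have U: "open U" "x \<in> U" unfolding U_def using 3 cont by (auto intro!: open_vimage)
    have Sx: "S x < 0" unfolding S_def using 3 rng[of x] sin_gt_zero[of "- \<theta> x"] by auto
    have Cx: "C x < 1" 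
    proof -
      have "C x < cos 0" unfolding C_def using 3 rng[of x] cos_monotone_0_pi[of 0 "- \<theta> x"] by auto
      then show ?thesis by simp
    qed
    have sq: "sqrt (1 - (C x)\<^sup>2) = - S x"
    proof -
      have "1 - (C x)\<^sup>2 = (S x)\<^sup>2" using ss[of x] by simp
      then show ?thesis using Sx by simp
    qed
    have "((\<lambda>y. - arccos (C y)) has_real_derivative - (inverse (- sqrt (1 - (C x)\<^sup>2)) * deriv C x)) (at x)"
      by (intro DERIV_minus DERIV_chain2[OF DERIV_arccos dC]) (use Cx Cnn[of x] in auto)
    moreover have "- (inverse (- sqrt (1 - (C x)\<^sup>2)) * deriv C x) = ?D"
    proof -
      have "S x * ?D = C x * (S x * deriv S x) - (S x)^2 * deriv C x" by (simp add: algebra_simps power2_eq_square)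
      also have "\<dots> = - ((C x)^2 + (S x)^2) * deriv C x"
      proof -
        have e1: "S x * deriv S x = - (C x * deriv C x)" using id[of x] by linarith
        show ?thesis unfolding e1 by (simp add: algebra_simps power2_eq_square)
      qed
      also have "\<dots> = - deriv C x" using ss[of x] by simp
      finally have "S x * ?D = - deriv C x" .
      then show ?thesis using Sx sq by (simp add: field_simps)
    qed
    ultimately have "((\<lambda>y. - arccos (C y)) has_real_derivative ?D) (at x)" by simp
    then show ?thesis
    proof (rule has_field_derivative_transform_within_open[OF _ U])
      fix y assume "y \<in> U"
      then have "0 \<le> - \<theta> y" "- \<theta> y \<le> pi" using rng[of y] by (auto simp: U_def)
      then show "- arccos (C y) = \<theta> y" unfolding C_def using arccos_cos[of "- \<theta> y"] by simp
    qed
  qed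
  then show ?thesis unfolding C_def S_def .
qed



lemma L2c_set_integrable:
  assumes "L2c h"
  shows "set_integrable lborel {a..b} (\<lambda>x. cmod (h x))"
proof -
  have m: "h \<in> borel_measurable lborel" and i: "integrable lborel (\<lambda>x. (cmod (h x))^2)"
    using assms unfolding L2c_def by auto
  have "integrable lborel (\<lambda>x. indicator {a..b} x *\<^sub>R (1::real) + (cmod (h x))^2)"
    by (intro Bochner_Integration.integrable_add integrable_indicator i) (auto simp: emeasure_lborel_Icc_eq)
  then show ?thesis unfolding set_integrable_def
  proof (rule Bochner_Integration.integrable_bound)
    show "(\<lambda>x. indicat_real {a..b} x *\<^sub>R cmod (h x)) \<in> borel_measurable lborel" using m by measurable
    show "AE x in lborel. norm (indicat_real {a..b} x *\<^sub>R cmod (h x)) \<le> norm (indicat_real {a..b} x *\<^sub>R 1 + (cmod (h x))\<^sup>2)"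
    proof (rule AE_I2)
      fix x
      have "0 \<le> (cmod (h x) - 1)^2" by simp
      then have "2 * cmod (h x) \<le> 1 + (cmod (h x))^2" by (simp add: power2_diff)
      then have "cmod (h x) \<le> 1 + (cmod (h x))^2" using norm_ge_zero[of "h x"] by linarith
      then show "norm (indicat_real {a..b} x *\<^sub>R cmod (h x)) \<le> norm (indicat_real {a..b} x *\<^sub>R 1 + (cmod (h x))\<^sup>2)"
        by (auto simp: indicator_def)
    qed
  qed
qed

lemma gronwall_zero:
  fixes \<theta> :: "real \<Rightarrow> real" and h :: "real \<Rightarrow> complex"
  assumes sm: "smooth \<theta>" and kp: "\<kappa> > 0" and ep: "\<epsilon> > 0" and hL: "L2c h"
    and EL: "\<And>x. \<kappa> * deriv (deriv \<theta>) x + sin (2 * \<theta> x) / 2 + (1 / \<epsilon>) * Re (h x) * sin (\<theta> x) = 0"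
    and tb: "\<theta> b = 0" and dtb: "deriv \<theta> b = 0"
  shows "\<exists>\<delta>>0. \<forall>t\<in>{b..b+\<delta>}. \<theta> t = 0"
proof -
  define q where "q = (\<lambda>x. (1 + cmod (h x) / \<epsilon>) / \<kappa>)"
  have d1: "(\<theta> has_real_derivative deriv \<theta> x) (at x)" for x using sm smooth_has_deriv by blast
  have d2: "(deriv \<theta> has_real_derivative deriv (deriv \<theta>) x) (at x)" for x using sm smooth_has_deriv smooth_deriv by blast
  have bound: "\<bar>deriv (deriv \<theta>) x\<bar> \<le> q x * \<bar>\<theta> x\<bar>" for x
  proof -
    have e: "\<kappa> * deriv (deriv \<theta>) x = - (sin (\<theta> x) * cos (\<theta> x) + Re (h x) * sin (\<theta> x) / \<epsilon>)"
    proof -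
      have sd: "sin (2 * \<theta> x) / 2 = sin (\<theta> x) * cos (\<theta> x)" by (simp add: sin_double)
      show ?thesis using EL[of x] sd by (simp add: algebra_simps)
    qed
    have s: "\<bar>sin (\<theta> x)\<bar> \<le> \<bar>\<theta> x\<bar>" by (rule abs_sin_le_one[THEN order_trans, of _ "\<bar>\<theta> x\<bar>"] | simp add: abs_sin_x_le_abs_x)
    have a: "\<bar>sin (\<theta> x) * cos (\<theta> x)\<bar> \<le> \<bar>\<theta> x\<bar>"
    proof -
      have "\<bar>sin (\<theta> x)\<bar> * \<bar>cos (\<theta> x)\<bar> \<le> \<bar>sin (\<theta> x)\<bar>" by (rule mult_left_le[OF abs_cos_le_one abs_ge_zero])
      then show ?thesis using s by (simp add: abs_mult)
    qed
    have b: "\<bar>Re (h x) * sin (\<theta> x) / \<epsilon>\<bar> \<le> cmod (h x) * \<bar>\<theta> x\<bar> / \<epsilon>"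
    proof -
      have "\<bar>Re (h x) * sin (\<theta> x)\<bar> \<le> cmod (h x) * \<bar>\<theta> x\<bar>"
        unfolding abs_mult by (rule mult_mono[OF abs_Re_le_cmod s]) auto
      then show ?thesis using ep by (simp add: divide_right_mono)
    qed
    have "\<kappa> * \<bar>deriv (deriv \<theta>) x\<bar> = \<bar>\<kappa> * deriv (deriv \<theta>) x\<bar>" using kp by (simp add: abs_mult)
    also have "\<dots> = \<bar>sin (\<theta> x) * cos (\<theta> x) + Re (h x) * sin (\<theta> x) / \<epsilon>\<bar>" using e by (simp only: abs_minus_cancel)
    also have "\<dots> \<le> \<bar>sin (\<theta> x) * cos (\<theta> x)\<bar> + \<bar>Re (h x) * sin (\<theta> x) / \<epsilon>\<bar>" by (rule abs_triangle_ineq)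
    also have "\<dots> \<le> \<bar>\<theta> x\<bar> + cmod (h x) * \<bar>\<theta> x\<bar> / \<epsilon>" using a b by (rule add_mono)
    finally have "\<kappa> * \<bar>deriv (deriv \<theta>) x\<bar> \<le> \<bar>\<theta> x\<bar> + cmod (h x) * \<bar>\<theta> x\<bar> / \<epsilon>" .
    then show ?thesis unfolding q_def using kp ep by (simp add: field_simps)
  qed
  have qint1: "q integrable_on {b..b+1}"
  proof -
    have "(\<lambda>x. cmod (h x)) integrable_on {b..b+1}"
      using L2c_set_integrable[OF hL] set_borel_integral_eq_integral(1) by blast
    then have "(\<lambda>x. 1 / \<kappa> + (1 / (\<epsilon> * \<kappa>)) * cmod (h x)) integrable_on {b..b+1}"
      using kp ep by (intro Henstock_Kurzweil_Integration.integrable_add integrable_on_const) auto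
    then show ?thesis unfolding q_def by (simp add: field_simps add_divide_distrib)
  qed
  have qnn: "q x \<ge> 0" for x unfolding q_def using kp ep by simp
  define Q where "Q = integral {b..b+1} q"
  have Qnn: "Q \<ge> 0" unfolding Q_def using qnn by (simp add: Henstock_Kurzweil_Integration.integral_nonneg qint1)
  define \<delta> where "\<delta> = 1 / (Q + 2)"
  have dpos: "\<delta> > 0" "\<delta> \<le> 1" and dQ: "\<delta> * Q < 1" using Qnn unfolding \<delta>_def by (auto simp: field_simps)
  obtain t0 where t0: "t0 \<in> {b..b+\<delta>}" and t0max: "\<And>t. t \<in> {b..b+\<delta>} \<Longrightarrow> \<bar>deriv \<theta> t\<bar> \<le> \<bar>deriv \<theta> t0\<bar>"
  proof -
    have "continuous_on {b..b+\<delta>} (\<lambda>t. \<bar>deriv \<theta> t\<bar>)"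
      using smooth_cont[OF smooth_deriv[OF sm]] by (intro continuous_on_rabs) auto
    from continuous_attains_sup[OF compact_Icc _ this] dpos that show ?thesis by auto
  qed
  define M where "M = \<bar>deriv \<theta> t0\<bar>"
  have Mnn: "M \<ge> 0" unfolding M_def by simp
  have thb: "\<bar>\<theta> t\<bar> \<le> M * \<delta>" if "t \<in> {b..b+\<delta>}" for t
  proof (cases "t = b")
    case True then show ?thesis using tb Mnn dpos by simp
  next
    case False
    then have "b < t" using that by auto
    from MVT2[OF this, of \<theta> "deriv \<theta>"] d1 obtain z where z: "b < z" "z < t" "\<theta> t - \<theta> b = (t - b) * deriv \<theta> z" by blast
    have "\<bar>deriv \<theta> z\<bar> \<le> M" unfolding M_def using t0max[of z] z that by auto
    then have "\<bar>\<theta> t\<bar> \<le> (t - b) * M" using z tb by (simp add: abs_mult mult_left_mono)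
    also have "\<dots> \<le> \<delta> * M" using that Mnn by (intro mult_right_mono) auto
    finally show ?thesis by (simp add: mult.commute)
  qed
  have "\<bar>deriv \<theta> t\<bar> \<le> M * \<delta> * Q" if t: "t \<in> {b..b+\<delta>}" for t
  proof -
    have ftc: "(deriv (deriv \<theta>) has_integral deriv \<theta> t - deriv \<theta> b) {b..t}"
      using t by (intro fundamental_theorem_of_calculus)
         (auto intro!: has_vector_derivative_at_within d2[unfolded has_real_derivative_iff_has_vector_derivative])
    have qt: "q integrable_on {b..t}" 
      by (rule integrable_subinterval_real[OF qint1]) (use t dpos in auto)
    have "\<bar>integral {b..t} (deriv (deriv \<theta>))\<bar> \<le> integral {b..t} (\<lambda>s. M * \<delta> * q s)"
    proof -
      have "norm (integral {b..t} (deriv (deriv \<theta>))) \<le> integral {b..t} (\<lambda>s. M * \<delta> * q s)"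
      proof (rule integral_norm_bound_integral)
        show "deriv (deriv \<theta>) integrable_on {b..t}" using ftc by blast
        show "(\<lambda>s. M * \<delta> * q s) integrable_on {b..t}" using integrable_on_cmult_left[OF qt, of "M*\<delta>"] by simp
        fix s assume s: "s \<in> {b..t}"
        then have "s \<in> {b..b+\<delta>}" using t by auto
        then have "\<bar>\<theta> s\<bar> \<le> M * \<delta>" by (rule thb)
        then have "q s * \<bar>\<theta> s\<bar> \<le> q s * (M * \<delta>)" using qnn[of s] by (rule mult_left_mono)
        then show "norm (deriv (deriv \<theta>) s) \<le> M * \<delta> * q s" using bound[of s] by (simp add: mult.commute)
      qed
      then show ?thesis by simp
    qed
    also have "\<dots> = M * \<delta> * integral {b..t} q" by simp
    also have "\<dots> \<le> M * \<delta> * Q" unfolding Q_def using Mnn dpos qt qint1 qnn t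
      by (intro mult_left_mono integral_subset_le) auto
    finally show ?thesis using ftc dtb by (simp add: integral_unique)
  qed
  then have "M \<le> M * \<delta> * Q" using t0 unfolding M_def by blast
  then have "M * (1 - \<delta> * Q) \<le> 0" by (simp add: algebra_simps)
  moreover have "1 - \<delta> * Q > 0" using dQ by simp
  ultimately have "M \<le> 0" by (simp add: mult_le_0_iff)
  then have "M = 0" using Mnn by simp
  then show ?thesis using thb dpos by (intro exI[of _ \<delta>]) auto
qed



lemma poly_div_exp_0: "((\<lambda>y::real. poly q y / exp y) \<longlongrightarrow> 0) at_top"
proof -
  have "((\<lambda>y::real. \<Sum>i\<le>degree q. coeff q i * (y ^ i / exp y)) \<longlongrightarrow> (\<Sum>i\<le>degree q. coeff q i * 0)) at_top"
    by (intro tendsto_sum tendsto_mult tendsto_const tendsto_power_div_exp_0)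
  then show ?thesis by (simp add: poly_altdef sum_divide_distrib)
qed

definition Epol :: "nat \<Rightarrow> real poly" where
  "Epol n = ((\<lambda>p. [:0,0,1:] * (p - pderiv p)) ^^ n) 1"

lemma Epol_Suc: "Epol (Suc n) = [:0,0,1:] * (Epol n - pderiv (Epol n))"
  by (simp add: Epol_def)

definition Ef :: "nat \<Rightarrow> real \<Rightarrow> real" where
  "Ef n x = (if x > 0 then poly (Epol n) (1 / x) * exp (- 1 / x) else 0)"

lemma Ef_deriv_pos:
  assumes "x > 0"
  shows "((\<lambda>x. poly p (1 / x) * exp (- 1 / x)) has_real_derivative
          poly ([:0,0,1:] * (p - pderiv p)) (1 / x) * exp (- 1 / x)) (at x)"
proof -
  have "((\<lambda>x. poly p (1 / x) * exp (- 1 / x)) has_real_derivative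
          (poly (pderiv p) (1 / x) * (- 1 / x^2)) * exp (- 1 / x) + poly p (1 / x) * (exp (- 1 / x) * (1 / x^2))) (at x)"
    using assms
    by (auto intro!: derivative_eq_intros DERIV_chain2[OF poly_DERIV] simp: power2_eq_square field_simps)
  then show ?thesis by (simp add: algebra_simps power2_eq_square field_simps)
qed

lemma Ef_right_limit: "((\<lambda>h. Ef n h / h) \<longlongrightarrow> 0) (at_right 0)"
proof -
  have l: "((\<lambda>y. poly (pCons 0 (Epol n)) y / exp y) \<longlongrightarrow> 0) at_top" by (rule poly_div_exp_0)
  have "((\<lambda>h. poly (pCons 0 (Epol n)) (inverse h) / exp (inverse h)) \<longlongrightarrow> 0) (at_right 0)"
    by (rule filterlim_compose[OF l filterlim_inverse_at_top_right])
  moreover have "eventually (\<lambda>h. poly (pCons 0 (Epol n)) (inverse h) / exp (inverse h) = Ef n h / h) (at_right (0::real))"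
    unfolding eventually_at_filter
  proof (rule always_eventually, intro allI impI)
    fix h :: real assume "h \<noteq> 0" "h \<in> {0<..}"
    then have h: "h > 0" by simp
    have e: "exp (- 1 / h) = inverse (exp (inverse h))" by (simp add: exp_minus divide_inverse)
    show "poly (pCons 0 (Epol n)) (inverse h) / exp (inverse h) = Ef n h / h"
      using h unfolding Ef_def e by (simp add: divide_inverse)
  qed
  ultimately show ?thesis by (rule Lim_transform_eventually)
qed

lemma Ef_deriv: "(Ef n has_real_derivative Ef (Suc n) x) (at x)"
proof -
  consider "x > 0" | "x < 0" | "x = 0" by linarith
  then show ?thesis
  proof cases
    case 1
    have "((\<lambda>x. poly (Epol n) (1 / x) * exp (- 1 / x)) has_real_derivative Ef (Suc n) x) (at x)"
      using Ef_deriv_pos[OF 1, of "Epol n"] 1 by (simp add: Ef_def Epol_Suc)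
    then show ?thesis
      by (rule has_field_derivative_transform_within_open[where S="{0<..}"]) (use 1 in \<open>auto simp: Ef_def\<close>)
  next
    case 2
    have "((\<lambda>x. 0) has_real_derivative Ef (Suc n) x) (at x)" using 2 by (simp add: Ef_def)
    then show ?thesis
      by (rule has_field_derivative_transform_within_open[where S="{..<0}"]) (use 2 in \<open>auto simp: Ef_def\<close>)
  next
    case 3
    have "((\<lambda>h. (Ef n (0 + h) - Ef n 0) / h) \<longlongrightarrow> 0) (at 0)"
      unfolding filterlim_at_split
    proof
      show "((\<lambda>h. (Ef n (0 + h) - Ef n 0) / h) \<longlongrightarrow> 0) (at_left 0)"
      proof (rule Lim_transform_eventually[OF tendsto_const])
        show "eventually (\<lambda>h. 0 = (Ef n (0 + h) - Ef n 0) / h) (at_left (0::real))"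
          unfolding eventually_at_filter by (rule always_eventually) (auto simp: Ef_def)
      qed
      show "((\<lambda>h. (Ef n (0 + h) - Ef n 0) / h) \<longlongrightarrow> 0) (at_right 0)"
        using Ef_right_limit[of n] by (simp add: Ef_def)
    qed
    then show ?thesis using 3 by (simp add: DERIV_def Ef_def)
  qed
qed

lemma smooth_Ef: "smooth (Ef 0)"
  by (rule chain_smooth[of Ef, OF Ef_deriv])

lemma Ef0: "Ef 0 x = (if x > 0 then exp (- 1 / x) else 0)"
  by (simp add: Ef_def Epol_def)



definition rho :: "real \<Rightarrow> real \<Rightarrow> real \<Rightarrow> real" where
  "rho c \<delta> x = Ef 0 (x - c) * Ef 0 (c + \<delta> - x)"

lemma smooth_rho: "smooth (rho c \<delta>)"
proof -
  have "smooth (\<lambda>x. Ef 0 (1 * x + (- c)))" by (rule smooth_affine[OF smooth_Ef])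
  moreover have "smooth (\<lambda>x. Ef 0 ((-1) * x + (c + \<delta>)))" by (rule smooth_affine[OF smooth_Ef])
  ultimately have "smooth (\<lambda>x. Ef 0 (1 * x + (- c)) * Ef 0 ((-1) * x + (c + \<delta>)))" by (rule smooth_mult)
  then show ?thesis unfolding rho_def by (simp add: algebra_simps)
qed

lemma rho_nonneg: "rho c \<delta> x \<ge> 0" unfolding rho_def Ef0 by simp

lemma rho_zero: "x \<le> c \<or> c + \<delta> \<le> x \<Longrightarrow> rho c \<delta> x = 0" unfolding rho_def Ef0 by auto

lemma rho_pos: "c < x \<Longrightarrow> x < c + \<delta> \<Longrightarrow> rho c \<delta> x > 0" unfolding rho_def Ef0 by auto

lemma rho_cont: "continuous_on S (rho c \<delta>)" using smooth_cont[OF smooth_rho] .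

definition Iint :: "real \<Rightarrow> real \<Rightarrow> real \<Rightarrow> real" where
  "Iint c \<delta> x = integral {c-1..x} (rho c \<delta>)"

lemma Iint_zero: "x \<le> c \<Longrightarrow> Iint c \<delta> x = 0"
proof -
  assume "x \<le> c"
  then have "integral {c-1..x} (rho c \<delta>) = integral {c-1..x} (\<lambda>x. 0)"
    by (intro integral_cong) (auto intro: rho_zero)
  then show ?thesis unfolding Iint_def by simp
qed

lemma Iint_deriv: "(Iint c \<delta> has_real_derivative rho c \<delta> x) (at x)"
proof (cases "x < c")
  case True
  have "((\<lambda>x. 0) has_real_derivative rho c \<delta> x) (at x)" using True by (simp add: rho_zero)
  then show ?thesis
    by (rule has_field_derivative_transform_within_open[where S="{..<c}"]) (use True in \<open>auto simp: Iint_zero\<close>)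
next
  case False
  have "((\<lambda>u. integral {c-1..u} (rho c \<delta>)) has_real_derivative rho c \<delta> x) (at x within {c-1..x+1})"
    using False by (intro integral_has_real_derivative rho_cont) auto
  moreover have "at x within {c-1..x+1} = at x"
    using False by (intro at_within_open_subset[where S="{c-1<..<x+1}"]) auto
  ultimately show ?thesis unfolding Iint_def by simp
qed

lemma Iint_mono: "x \<le> y \<Longrightarrow> Iint c \<delta> x \<le> Iint c \<delta> y"
proof -
  assume "x \<le> y"
  then show ?thesis
  proof (rule DERIV_nonneg_imp_nondecreasing[of x y "Iint c \<delta>"])
    fix z show "\<exists>d. (Iint c \<delta> has_real_derivative d) (at z) \<and> 0 \<le> d"
      using Iint_deriv rho_nonneg by blast
  qed
qed

lemma Iint_const:
  assumes "c + \<delta> \<le> x" shows "Iint c \<delta> x = Iint c \<delta> (c + \<delta>)"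
proof -
  have "Iint c \<delta> (c + \<delta>) \<le> Iint c \<delta> x" using assms by (rule Iint_mono)
  moreover have "- Iint c \<delta> (c + \<delta>) \<le> - Iint c \<delta> x"
  proof (rule DERIV_nonneg_imp_nondecreasing[OF assms])
    fix y assume "c + \<delta> \<le> y" "y \<le> x"
    then show "\<exists>d. ((\<lambda>x. - Iint c \<delta> x) has_real_derivative d) (at y) \<and> 0 \<le> d"
    proof (intro exI[of _ "- rho c \<delta> y"] conjI)
      show "((\<lambda>x. - Iint c \<delta> x) has_real_derivative - rho c \<delta> y) (at y)" by (intro DERIV_minus Iint_deriv)
      show "0 \<le> - rho c \<delta> y" using \<open>c + \<delta> \<le> y\<close> by (simp add: rho_zero)
    qed
  qed
  ultimately show ?thesis by simp
qed

lemma Iint_pos: assumes "\<delta> > 0" shows "Iint c \<delta> (c + \<delta>) > 0"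
proof -
  have "c < c + \<delta>" using assms by simp
  from MVT2[OF this, of "Iint c \<delta>" "rho c \<delta>"] Iint_deriv obtain z where
    z: "c < z" "z < c + \<delta>" "Iint c \<delta> (c + \<delta>) - Iint c \<delta> c = (c + \<delta> - c) * rho c \<delta> z" by blast
  have "rho c \<delta> z > 0" using z by (intro rho_pos)
  then show ?thesis using z assms Iint_zero[of c c \<delta>] by simp
qed

definition step :: "real \<Rightarrow> real \<Rightarrow> real \<Rightarrow> real" where
  "step c \<delta> x = Iint c \<delta> x / Iint c \<delta> (c + \<delta>)"

lemma smooth_step: "smooth (step c \<delta>)"
proof -
  have "smooth (Iint c \<delta>)" by (rule smooth_from_deriv[OF Iint_deriv smooth_rho])
  then have "smooth (\<lambda>x. Iint c \<delta> x * (1 / Iint c \<delta> (c + \<delta>)))" by (intro smooth_mult smooth_const)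
  then show ?thesis unfolding step_def by simp
qed

lemma step_zero: "x \<le> c \<Longrightarrow> step c \<delta> x = 0" unfolding step_def by (simp add: Iint_zero)
lemma step_one: "\<delta> > 0 \<Longrightarrow> c + \<delta> \<le> x \<Longrightarrow> step c \<delta> x = 1"
  unfolding step_def using Iint_const Iint_pos by (metis less_irrefl divide_self)
lemma step_bounds: assumes "\<delta> > 0" shows "0 \<le> step c \<delta> x" "step c \<delta> x \<le> 1"
proof -
  have p: "Iint c \<delta> (c + \<delta>) > 0" using Iint_pos[OF assms] .
  have "0 \<le> Iint c \<delta> x"
  proof (cases "x \<le> c")
    case True then show ?thesis by (simp add: Iint_zero)
  next
    case False then show ?thesis using Iint_mono[of c x c \<delta>] Iint_zero[of c c \<delta>] by simp
  qed
  moreover have "Iint c \<delta> x \<le> Iint c \<delta> (c + \<delta>)"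
  proof (cases "x \<le> c + \<delta>")
    case True then show ?thesis by (rule Iint_mono)
  next
    case False then show ?thesis using Iint_const[of c \<delta> x] by simp
  qed
  ultimately show "0 \<le> step c \<delta> x" "step c \<delta> x \<le> 1" unfolding step_def using p by auto
qed

definition bump :: "real \<Rightarrow> real \<Rightarrow> real \<Rightarrow> real \<Rightarrow> real" where
  "bump a b \<delta> x = step (a - \<delta>) \<delta> x * (1 - step b \<delta> x)"

lemma smooth_bump: "smooth (bump a b \<delta>)"
  unfolding bump_def by (intro smooth_mult smooth_diff smooth_const smooth_step)

lemma bump_out: "\<delta> > 0 \<Longrightarrow> x < a - \<delta> \<or> b + \<delta> < x \<Longrightarrow> bump a b \<delta> x = 0"
  unfolding bump_def using step_zero step_one by auto

lemma bump_in: "\<delta> > 0 \<Longrightarrow> a \<le> x \<Longrightarrow> x \<le> b \<Longrightarrow> bump a b \<delta> x = 1"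
  unfolding bump_def using step_zero step_one by auto

lemma bump_bound: "\<delta> > 0 \<Longrightarrow> \<bar>bump a b \<delta> x\<bar> \<le> 1"
  unfolding bump_def using step_bounds[of \<delta>]
  by (auto simp: abs_mult intro!: mult_le_one)

lemma test_bump: "\<delta> > 0 \<Longrightarrow> test_fun (bump a b \<delta>)"
  unfolding test_fun_def
proof
  assume d: "\<delta> > 0"
  show "smooth (bump a b \<delta>)" by (rule smooth_bump)
  have "{x. bump a b \<delta> x \<noteq> 0} \<subseteq> {a - \<delta> .. b + \<delta>}" using bump_out[OF d] by force
  then show "bounded {x. bump a b \<delta> x \<noteq> 0}" by (rule bounded_subset[OF bounded_closed_interval])
qed

lemma bump_lim: "(\<lambda>n. bump a b (1 / Suc n) x) \<longlonglongrightarrow> indicator {a..b} x"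
proof (cases "a \<le> x \<and> x \<le> b")
  case True
  then show ?thesis using bump_in by (simp add: indicator_def)
next
  case False
  then have "x < a \<or> b < x" by auto
  then obtain e where e: "e > 0" "x < a - e \<or> b + e < x"
  proof
    assume "x < a"
    then have "x < a - (a - x)/2" by (simp add: field_simps)
    then show ?thesis using that[of "(a - x)/2"] \<open>x < a\<close> by auto
  next
    assume "b < x"
    then have "b + (x - b)/2 < x" by (simp add: field_simps)
    then show ?thesis using that[of "(x - b)/2"] \<open>b < x\<close> by auto
  qed
  obtain N where N: "1 / Suc N < e" using e(1) nat_approx_posE by blast
  have "eventually (\<lambda>n. bump a b (1 / Suc n) x = 0) sequentially"
    unfolding eventually_sequentially
  proof (intro exI allI impI)
    fix n assume "N \<le> n"
    then have "1 / real (Suc n) \<le> 1 / Suc N" by (intro divide_left_mono) auto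
    then have "1 / real (Suc n) < e" using N by simp
    then show "bump a b (1 / Suc n) x = 0" using e by (intro bump_out) auto
  qed
  moreover have "indicator {a..b} x = (0::real)" using False by auto
  ultimately show ?thesis by (simp add: tendsto_eventually)
qed



lemma cint:
  fixes g :: "real \<Rightarrow> real"
  assumes cont: "continuous_on UNIV g" and z: "\<And>x. x \<notin> {a..b} \<Longrightarrow> g x = 0"
  shows "integrable lborel g" "(LINT x|lborel. g x) = integral {a..b} g"
proof -
  have si: "set_integrable lborel {a..b} g"
    by (rule borel_integrable_atLeastAtMost'[OF continuous_on_subset[OF cont]]) simp
  have eq: "(\<lambda>x. indicator {a..b} x *\<^sub>R g x) = g" using z by (auto simp: fun_eq_iff indicator_def)
  show "integrable lborel g" using si unfolding set_integrable_def eq .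
  have "(LINT x|lborel. g x) = (LINT x:{a..b}|lborel. g x)" unfolding set_lebesgue_integral_def eq ..
  also have "\<dots> = integral {a..b} g" by (rule set_borel_integral_eq_integral(2)[OF si])
  finally show "(LINT x|lborel. g x) = integral {a..b} g" .
qed

lemma test_supp:
  assumes "test_fun \<phi>"
  obtains B where "B \<ge> 0" "\<And>x. \<bar>x\<bar> > B \<Longrightarrow> \<phi> x = 0"
proof -
  have "bounded {x. \<phi> x \<noteq> 0}" using assms unfolding test_fun_def by blast
  then obtain B where "\<And>x. x \<in> {x. \<phi> x \<noteq> 0} \<Longrightarrow> \<bar>x\<bar> \<le> B" unfolding bounded_real by blast
  then have "\<And>x. \<bar>x\<bar> > max B 0 \<Longrightarrow> \<phi> x = 0" by force
  then show ?thesis using that[of "max B 0"] by simp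
qed

lemma deriv_zero_outside:
  fixes f :: "real \<Rightarrow> real" and x B :: real
  assumes "\<And>x. \<bar>x\<bar> > B \<Longrightarrow> f x = 0" "\<bar>x\<bar> > B"
  shows "deriv f x = 0"
proof -
  have o: "open {y::real. B < \<bar>y\<bar>}" by (rule open_Collect_less) (auto intro: continuous_intros)
  have "((\<lambda>x. 0) has_real_derivative 0) (at x)" by simp
  then have "(f has_real_derivative 0) (at x)"
    by (rule has_field_derivative_transform_within_open[where S="{y. \<bar>y\<bar> > B}"])
       (use assms o in auto)
  then show ?thesis by (rule DERIV_imp_deriv)
qed

lemma test_deriv: assumes "test_fun \<phi>" shows "test_fun (deriv \<phi>)"
proof -
  obtain B where B: "B \<ge> 0" "\<And>x. \<bar>x\<bar> > B \<Longrightarrow> \<phi> x = 0" using test_supp[OF assms] by blast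
  have "{x. deriv \<phi> x \<noteq> 0} \<subseteq> {-B..B}" using deriv_zero_outside[of B \<phi>, OF B(2)] by force
  then have "bounded {x. deriv \<phi> x \<noteq> 0}" by (rule bounded_subset[OF bounded_closed_interval])
  then show ?thesis using assms smooth_deriv unfolding test_fun_def by blast
qed

lemma test_higher: "test_fun \<phi> \<Longrightarrow> test_fun ((deriv ^^ j) \<phi>)"
  by (induction j) (auto intro: test_deriv)

lemma ibp1:
  assumes F: "smooth F" and \<phi>: "test_fun \<phi>"
  shows "(LINT x|lborel. deriv F x * \<phi> x) = - (LINT x|lborel. F x * deriv \<phi> x)"
proof -
  obtain B where B: "B \<ge> 0" "\<And>x. \<bar>x\<bar> > B \<Longrightarrow> \<phi> x = 0" using test_supp[OF \<phi>] by blast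
  have sphi: "smooth \<phi>" using \<phi> unfolding test_fun_def by blast
  have dB: "\<And>x. \<bar>x\<bar> > B \<Longrightarrow> deriv \<phi> x = 0" using deriv_zero_outside[of B \<phi>, OF B(2)] by blast
  let ?a = "- (B + 1)" and ?b = "B + 1"
  have out: "x \<notin> {?a..?b} \<Longrightarrow> \<bar>x\<bar> > B" for x by auto
  have c1: "continuous_on UNIV (\<lambda>x. deriv F x * \<phi> x)"
    by (intro continuous_intros smooth_cont smooth_deriv F sphi)
  have c2: "continuous_on UNIV (\<lambda>x. F x * deriv \<phi> x)"
    by (intro continuous_intros smooth_cont smooth_deriv F sphi)
  have i1: "(LINT x|lborel. deriv F x * \<phi> x) = integral {?a..?b} (\<lambda>x. deriv F x * \<phi> x)"
    by (rule cint(2)[OF c1]) (use B(2) out in auto)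
  have i2: "(LINT x|lborel. F x * deriv \<phi> x) = integral {?a..?b} (\<lambda>x. F x * deriv \<phi> x)"
    by (rule cint(2)[OF c2]) (use dB out in auto)
  have ftc: "((\<lambda>x. deriv F x * \<phi> x + F x * deriv \<phi> x) has_integral (F ?b * \<phi> ?b - F ?a * \<phi> ?a)) {?a..?b}"
  proof (rule fundamental_theorem_of_calculus)
    show "?a \<le> ?b" using B by simp
    fix x
    have "((\<lambda>x. F x * \<phi> x) has_real_derivative deriv F x * \<phi> x + F x * deriv \<phi> x) (at x)"
      using DERIV_mult[OF smooth_has_deriv[OF F] smooth_has_deriv[OF sphi]] by (simp add: mult.commute)
    then show "((\<lambda>x. F x * \<phi> x) has_vector_derivative deriv F x * \<phi> x + F x * deriv \<phi> x) (at x within {?a..?b})"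
      by (simp add: has_real_derivative_iff_has_vector_derivative has_vector_derivative_at_within)
  qed
  have e0: "F ?b * \<phi> ?b - F ?a * \<phi> ?a = 0" using B by simp
  have int1: "(\<lambda>x. deriv F x * \<phi> x) integrable_on {?a..?b}"
    by (rule integrable_continuous_interval[OF continuous_on_subset[OF c1]]) simp
  have int2: "(\<lambda>x. F x * deriv \<phi> x) integrable_on {?a..?b}"
    by (rule integrable_continuous_interval[OF continuous_on_subset[OF c2]]) simp
  have "integral {?a..?b} (\<lambda>x. deriv F x * \<phi> x) + integral {?a..?b} (\<lambda>x. F x * deriv \<phi> x) = 0"
    using integral_add[OF int1 int2] integral_unique[OF ftc] e0 by simp
  then show ?thesis using i1 i2 by simp
qed

lemma ibp:
  assumes F: "smooth F" and \<phi>: "test_fun \<phi>"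
  shows "(LINT x|lborel. (deriv ^^ j) F x * \<phi> x) = (-1)^j * (LINT x|lborel. F x * (deriv ^^ j) \<phi> x)"
  using \<phi>
proof (induction j arbitrary: \<phi>)
  case 0 then show ?case by simp
next
  case (Suc j)
  have "(LINT x|lborel. (deriv ^^ Suc j) F x * \<phi> x) = (LINT x|lborel. deriv ((deriv ^^ j) F) x * \<phi> x)" by simp
  also have "\<dots> = - (LINT x|lborel. (deriv ^^ j) F x * deriv \<phi> x)"
    by (rule ibp1[OF smooth_higher[OF F] Suc.prems])
  also have "\<dots> = - ((-1)^j * (LINT x|lborel. F x * (deriv ^^ j) (deriv \<phi>) x))"
    using Suc.IH[OF test_deriv[OF Suc.prems]] by simp
  also have "\<dots> = (-1)^Suc j * (LINT x|lborel. F x * (deriv ^^ Suc j) \<phi> x)"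
    by (simp only: deriv_funpow_Suc) simp
  finally show ?case .
qed



lemma cont_meas: "continuous_on UNIV (F :: real \<Rightarrow> real) \<Longrightarrow> F \<in> borel_measurable lborel"
  using borel_measurable_continuous_onI by simp

lemma L2_meas: "L2 g \<Longrightarrow> g \<in> borel_measurable lborel" unfolding L2_def by blast

lemma L2_local:
  assumes "L2 g" shows "integrable lborel (\<lambda>x. \<bar>g x\<bar> * indicator {a..b} x)"
proof -
  have m: "g \<in> borel_measurable lborel" and i: "integrable lborel (\<lambda>x. (g x)^2)"
    using assms unfolding L2_def by auto
  have "integrable lborel (\<lambda>x. indicator {a..b} x *\<^sub>R (1::real) + (g x)^2)"
    by (intro Bochner_Integration.integrable_add integrable_indicator i) (auto simp: emeasure_lborel_Icc_eq)
  then show ?thesis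
  proof (rule Bochner_Integration.integrable_bound)
    show "(\<lambda>x. \<bar>g x\<bar> * indicator {a..b} x) \<in> borel_measurable lborel" using m by measurable
    show "AE x in lborel. norm (\<bar>g x\<bar> * indicator {a..b} x) \<le> norm (indicat_real {a..b} x *\<^sub>R 1 + (g x)\<^sup>2)"
    proof (rule AE_I2)
      fix x
      have "0 \<le> (\<bar>g x\<bar> - 1)^2" by simp
      then have "2 * \<bar>g x\<bar> \<le> 1 + (\<bar>g x\<bar>)^2" by (simp add: power2_diff)
      then have "\<bar>g x\<bar> \<le> 1 + (g x)^2" by simp
      then show "norm (\<bar>g x\<bar> * indicator {a..b} x) \<le> norm (indicat_real {a..b} x *\<^sub>R 1 + (g x)\<^sup>2)"
        by (auto simp: indicator_def)
    qed
  qed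
qed

lemma cont_local:
  assumes "continuous_on UNIV (F :: real \<Rightarrow> real)" shows "integrable lborel (\<lambda>x. \<bar>F x\<bar> * indicator {a..b} x)"
  by (rule borel_integrable_atLeastAtMost) (use assms in \<open>auto intro: continuous_intros continuous_on_interior\<close>)

lemma test_cont: "test_fun \<phi> \<Longrightarrow> continuous_on UNIV \<phi>"
  unfolding test_fun_def using smooth_cont by blast

lemma test_sq_int: assumes "test_fun \<phi>" shows "integrable lborel (\<lambda>x. (\<phi> x)^2)"
proof -
  obtain B where B: "B \<ge> 0" "\<And>x. \<bar>x\<bar> > B \<Longrightarrow> \<phi> x = 0" using test_supp[OF assms] by blast
  show ?thesis
    by (rule cint(1)[of _ "-B" B]) (use test_cont[OF assms] B in \<open>auto intro: continuous_intros\<close>)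
qed

lemma L2_test_int:
  assumes "L2 g" "test_fun \<phi>" shows "integrable lborel (\<lambda>x. g x * \<phi> x)"
proof -
  have "integrable lborel (\<lambda>x. (g x)^2 + (\<phi> x)^2)"
    using assms test_sq_int unfolding L2_def by auto
  then show ?thesis
  proof (rule Bochner_Integration.integrable_bound)
    show "(\<lambda>x. g x * \<phi> x) \<in> borel_measurable lborel"
      using L2_meas[OF assms(1)] cont_meas[OF test_cont[OF assms(2)]] by measurable
    show "AE x in lborel. norm (g x * \<phi> x) \<le> norm ((g x)\<^sup>2 + (\<phi> x)\<^sup>2)"
    proof (rule AE_I2)
      fix x
      have "0 \<le> (\<bar>g x\<bar> - \<bar>\<phi> x\<bar>)^2" by simp
      then have "2 * (\<bar>g x\<bar> * \<bar>\<phi> x\<bar>) \<le> (g x)^2 + (\<phi> x)^2" by (simp add: power2_diff)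
      moreover have "0 \<le> \<bar>g x\<bar> * \<bar>\<phi> x\<bar>" by simp
      ultimately have "\<bar>g x\<bar> * \<bar>\<phi> x\<bar> \<le> (g x)^2 + (\<phi> x)^2" by linarith
      then show "norm (g x * \<phi> x) \<le> norm ((g x)\<^sup>2 + (\<phi> x)\<^sup>2)"
        by (simp add: abs_mult)
    qed
  qed
qed

lemma cont_test_int:
  assumes "continuous_on UNIV F" "test_fun \<phi>" shows "integrable lborel (\<lambda>x. F x * \<phi> x)"
proof -
  obtain B where B: "B \<ge> 0" "\<And>x. \<bar>x\<bar> > B \<Longrightarrow> \<phi> x = 0" using test_supp[OF assms(2)] by blast
  show ?thesis
    by (rule cint(1)[of _ "-B" B]) (use test_cont[OF assms(2)] assms(1) B in \<open>auto intro: continuous_intros\<close>)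
qed



lemma interval_zero_AE:
  fixes D :: "real \<Rightarrow> real"
  assumes Dm: "D \<in> borel_measurable lborel"
    and Di: "\<And>a b. integrable lborel (\<lambda>x. D x * indicator {a..b} x)"
    and D0: "\<And>a b. (LINT x|lborel. D x * indicator {a..b} x) = 0"
  shows "AE x in lborel. D x = 0"
proof -
  have N: "AE y in lborel. D y * indicator {- real N..real N} y = 0" for N :: nat
  proof -
    define DN where "DN = (\<lambda>y. D y * indicator {- real N..real N} y)"
    have DNm[measurable]: "DN \<in> borel_measurable lborel" unfolding DN_def using Dm by measurable
    have DNi: "integrable lborel DN" unfolding DN_def by (rule Di)
    have z: "(LINT y|lborel. DN y * indicator {x<..} y) = 0" for x
    proof -
      consider "x < - real N" | "real N \<le> x" | "- real N \<le> x" "x < real N" by linarith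
      then show ?thesis
      proof cases
        case 1
        have "(\<lambda>y. DN y * indicator {x<..} y) = (\<lambda>y. D y * indicator {- real N..real N} y)"
          using 1 by (auto simp: DN_def fun_eq_iff indicator_def)
        then show ?thesis using D0 by simp
      next
        case 2
        have "(\<lambda>y. DN y * indicator {x<..} y) = (\<lambda>y. 0)"
          using 2 by (auto simp: DN_def fun_eq_iff indicator_def)
        then show ?thesis by simp
      next
        case 3
        have "(LINT y|lborel. DN y * indicator {x<..} y) = (LINT y|lborel. D y * indicator {x..real N} y)"
        proof (rule integral_cong_AE)
          show "(\<lambda>y. DN y * indicator {x<..} y) \<in> borel_measurable lborel" by measurable
          show "(\<lambda>y. D y * indicator {x..real N} y) \<in> borel_measurable lborel" using Dm by measurable
          show "AE y in lborel. DN y * indicator {x<..} y = D y * indicator {x..real N} y"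
            using AE_lborel_singleton[of x] by eventually_elim (use 3 in \<open>auto simp: DN_def indicator_def\<close>)
        qed
        then show ?thesis using D0 by simp
      qed
    qed
    define P where "P = (\<lambda>y. max (DN y) 0)"
    define Q where "Q = (\<lambda>y. max (- DN y) 0)"
    have Pm[measurable]: "P \<in> borel_measurable lborel" and Qm[measurable]: "Q \<in> borel_measurable lborel"
      unfolding P_def Q_def by measurable
    have Pi: "integrable lborel (\<lambda>y. P y * indicator A y)" if "A \<in> sets borel" for A
    proof -
      have "integrable lborel (\<lambda>y. max (DN y) 0)" by (intro integrable_max DNi) auto
      then show ?thesis unfolding P_def using that by (intro integrable_real_mult_indicator) auto
    qed
    have Qi: "integrable lborel (\<lambda>y. Q y * indicator A y)" if "A \<in> sets borel" for A
    proof -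
      have "integrable lborel (\<lambda>y. max (- DN y) 0)" by (intro integrable_max integrable_minus DNi) auto
      then show ?thesis unfolding Q_def using that by (intro integrable_real_mult_indicator) auto
    qed
    have em: "emeasure (density lborel (\<lambda>y. ennreal (R y))) {x<..} = ennreal (LINT y|lborel. R y * indicator {x<..} y)"
      if Rm: "R \<in> borel_measurable lborel" and Rnn: "\<And>y. R y \<ge> 0" and Ri: "integrable lborel (\<lambda>y. R y * indicator {x<..} y)" for R :: "real \<Rightarrow> real" and x :: real
    proof -
      have "emeasure (density lborel (\<lambda>y. ennreal (R y))) {x<..} = (\<integral>\<^sup>+ y. ennreal (R y) * indicator {x<..} y \<partial>lborel)"
      proof -
        have "(\<lambda>y. ennreal (R y)) \<in> borel_measurable lborel" using Rm by measurable
        moreover have "{x<..} \<in> sets lborel" by measurable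
        ultimately show ?thesis by (rule emeasure_density)
      qed
      also have "\<dots> = (\<integral>\<^sup>+ y. ennreal (R y * indicator {x<..} y) \<partial>lborel)"
        by (intro nn_integral_cong) (auto simp: indicator_def)
      also have "\<dots> = ennreal (LINT y|lborel. R y * indicator {x<..} y)"
        using Ri Rnn by (intro nn_integral_eq_integral) auto
      finally show ?thesis .
    qed
    have eqd: "density lborel (\<lambda>y. ennreal (P y)) = density lborel (\<lambda>y. ennreal (Q y))"
    proof (rule measure_eqI_lessThan)
      show "sets (density lborel (\<lambda>y. ennreal (P y))) = sets borel" by simp
      show "sets (density lborel (\<lambda>y. ennreal (Q y))) = sets borel" by simp
      fix x
      show "emeasure (density lborel (\<lambda>y. ennreal (P y))) {x<..} < \<infinity>"
        using em[of P x] Pi[of "{x<..}"] by (simp add: P_def)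
      have "(LINT y|lborel. P y * indicator {x<..} y) - (LINT y|lborel. Q y * indicator {x<..} y)
          = (LINT y|lborel. DN y * indicator {x<..} y)"
      proof -
        have "(LINT y|lborel. P y * indicator {x<..} y) - (LINT y|lborel. Q y * indicator {x<..} y)
          = (LINT y|lborel. P y * indicator {x<..} y - Q y * indicator {x<..} y)"
          using Pi[of "{x<..}"] Qi[of "{x<..}"] by (intro Bochner_Integration.integral_diff[symmetric]) auto
        also have "\<dots> = (LINT y|lborel. DN y * indicator {x<..} y)"
          by (intro Bochner_Integration.integral_cong) (auto simp: P_def Q_def max_def algebra_simps)
        finally show ?thesis .
      qed
      then have "(LINT y|lborel. P y * indicator {x<..} y) = (LINT y|lborel. Q y * indicator {x<..} y)"
        using z[of x] by simp
      then show "emeasure (density lborel (\<lambda>y. ennreal (P y))) {x<..} = emeasure (density lborel (\<lambda>y. ennreal (Q y))) {x<..}"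
        using em[of P x] em[of Q x] Pi[of "{x<..}"] Qi[of "{x<..}"] by (simp add: P_def Q_def)
    qed
    have "AE y in lborel. ennreal (P y) = ennreal (Q y)"
      by (rule sigma_finite_measure.density_unique[OF sigma_finite_lborel _ _ eqd]) auto
    then show ?thesis
    proof (rule AE_mp[OF _ AE_I2], intro impI)
      fix y assume "ennreal (P y) = ennreal (Q y)"
      then have "P y = Q y" unfolding P_def Q_def by (simp add: ennreal_inj)
      then show "D y * indicator {- real N..real N} y = 0" unfolding P_def Q_def DN_def by (auto simp: max_def split: if_splits)
    qed
  qed
  then have "AE y in lborel. \<forall>N::nat. D y * indicator {- real N..real N} y = 0"
    unfolding AE_all_countable using N by blast
  then show ?thesis
  proof (rule AE_mp[OF _ AE_I2], intro impI)
    fix y assume a: "\<forall>N::nat. D y * indicator {- real N..real N} y = 0"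
    obtain N :: nat where "\<bar>y\<bar> \<le> real N" using real_arch_simple by blast
    then show "D y = 0" using a[rule_format, of N] by (auto simp: indicator_def)
  qed
qed



lemma ident:
  fixes g F :: "real \<Rightarrow> real"
  assumes gL: "L2 g" and Fc: "continuous_on UNIV F"
    and eq: "\<And>\<phi>. test_fun \<phi> \<Longrightarrow> (LINT x|lborel. g x * \<phi> x) = (LINT x|lborel. F x * \<phi> x)"
  shows "AE x in lborel. g x = F x"
proof -
  define D where "D = (\<lambda>x. g x - F x)"
  have gm[measurable]: "g \<in> borel_measurable lborel" using L2_meas[OF gL] .
  have Fm[measurable]: "F \<in> borel_measurable lborel" using cont_meas[OF Fc] .
  have Dm[measurable]: "D \<in> borel_measurable lborel" unfolding D_def by measurable
  have wi: "integrable lborel (\<lambda>x. \<bar>g x\<bar> * indicator {a..b} x + \<bar>F x\<bar> * indicator {a..b} x)" for a b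
    by (intro Bochner_Integration.integrable_add L2_local[OF gL] cont_local[OF Fc])
  have Dbound: "\<bar>D x\<bar> * \<bar>c\<bar> \<le> \<bar>g x\<bar> * indicator {a..b} x + \<bar>F x\<bar> * indicator {a..b} x"
    if "\<bar>c\<bar> \<le> 1" "x \<notin> {a..b} \<Longrightarrow> c = 0" for x c a b
  proof (cases "x \<in> {a..b}")
    case True
    have "\<bar>D x\<bar> * \<bar>c\<bar> \<le> \<bar>D x\<bar>" using that(1) by (simp add: mult_left_le)
    also have "\<dots> \<le> \<bar>g x\<bar> + \<bar>F x\<bar>" unfolding D_def by simp
    finally show ?thesis using True by simp
  next
    case False then show ?thesis using that(2) by simp
  qed
  have Di: "integrable lborel (\<lambda>x. D x * indicator {a..b} x)" for a b
    using wi[of a b]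
  proof (rule Bochner_Integration.integrable_bound)
    show "(\<lambda>x. D x * indicator {a..b} x) \<in> borel_measurable lborel" by measurable
    show "AE x in lborel. norm (D x * indicator {a..b} x) \<le> norm (\<bar>g x\<bar> * indicator {a..b} x + \<bar>F x\<bar> * indicator {a..b} x)"
      by (rule AE_I2) (use Dbound[of "indicator {a..b} _" _ a b] in \<open>auto simp: abs_mult\<close>)
  qed
  have D0test: "(LINT x|lborel. D x * \<phi> x) = 0" if "test_fun \<phi>" for \<phi>
  proof -
    have "(LINT x|lborel. D x * \<phi> x) = (LINT x|lborel. g x * \<phi> x - F x * \<phi> x)"
      unfolding D_def by (simp add: algebra_simps)
    also have "\<dots> = (LINT x|lborel. g x * \<phi> x) - (LINT x|lborel. F x * \<phi> x)"
      by (intro Bochner_Integration.integral_diff L2_test_int[OF gL that] cont_test_int[OF Fc that])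
    finally show ?thesis using eq[OF that] by simp
  qed
  have D0: "(LINT x|lborel. D x * indicator {a..b} x) = 0" for a b
  proof -
    define s where "s = (\<lambda>n x. D x * bump a b (1 / Suc n) x)"
    have bm: "bump a b \<delta> \<in> borel_measurable lborel" for \<delta>
      by (rule cont_meas[OF smooth_cont[OF smooth_bump]])
    have lim: "(\<lambda>n. LINT x|lborel. s n x) \<longlonglongrightarrow> (LINT x|lborel. D x * indicator {a..b} x)"
    proof (rule integral_dominated_convergence[where w="\<lambda>x. \<bar>g x\<bar> * indicator {a-1..b+1} x + \<bar>F x\<bar> * indicator {a-1..b+1} x"])
      show "(\<lambda>x. D x * indicator {a..b} x) \<in> borel_measurable lborel" by measurable
      show "s n \<in> borel_measurable lborel" for n unfolding s_def using bm by measurable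
      show "integrable lborel (\<lambda>x. \<bar>g x\<bar> * indicator {a-1..b+1} x + \<bar>F x\<bar> * indicator {a-1..b+1} x)" by (rule wi)
      show "AE x in lborel. (\<lambda>n. s n x) \<longlonglongrightarrow> D x * indicator {a..b} x"
        unfolding s_def by (rule AE_I2) (intro tendsto_mult tendsto_const bump_lim)
      fix n
      show "AE x in lborel. norm (s n x) \<le> \<bar>g x\<bar> * indicator {a-1..b+1} x + \<bar>F x\<bar> * indicator {a-1..b+1} x"
      proof (rule AE_I2)
        fix x
        have d: "1 / real (Suc n) > 0" "1 / real (Suc n) \<le> 1" by (auto simp: field_simps)
        have "\<bar>bump a b (1 / Suc n) x\<bar> \<le> 1" using bump_bound[OF d(1)] .
        moreover have "bump a b (1 / Suc n) x = 0" if "x \<notin> {a-1..b+1}"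
        proof (rule bump_out[OF d(1)])
          have "x < a - 1 \<or> b + 1 < x" using that by auto
          then show "x < a - 1 / real (Suc n) \<or> b + 1 / real (Suc n) < x" using d(2) by linarith
        qed
        ultimately show "norm (s n x) \<le> \<bar>g x\<bar> * indicator {a-1..b+1} x + \<bar>F x\<bar> * indicator {a-1..b+1} x"
          unfolding s_def using Dbound[of "bump a b (1 / Suc n) x" x "a-1" "b+1"] by (simp add: abs_mult)
      qed
    qed
    moreover have "(\<lambda>n. LINT x|lborel. s n x) = (\<lambda>n. 0)"
    proof
      fix n show "(LINT x|lborel. s n x) = 0"
        unfolding s_def by (rule D0test[OF test_bump]) simp
    qed
    ultimately have "(\<lambda>n. 0::real) \<longlonglongrightarrow> (LINT x|lborel. D x * indicator {a..b} x)" by simp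
    then show ?thesis by (simp add: LIMSEQ_const_iff)
  qed
  have "AE x in lborel. D x = 0" by (rule interval_zero_AE[OF Dm Di D0])
  then show ?thesis unfolding D_def by simp
qed



lemma smooth_meas: "smooth f \<Longrightarrow> f \<in> borel_measurable lborel"
  using cont_meas smooth_cont by blast

lemma weak_classical:
  assumes F: "smooth F" and sob: "sobolev k F" and jk: "j \<le> k"
  shows "L2 ((deriv ^^ j) F)"
proof -
  obtain g where gL: "\<And>j. j \<le> k \<Longrightarrow> L2 (g j)"
    and gi: "\<And>j \<phi>. j \<le> k \<Longrightarrow> test_fun \<phi> \<Longrightarrow> (LINT x|lborel. g j x * \<phi> x) = (-1)^j * (LINT x|lborel. F x * (deriv ^^ j) \<phi> x)"
    using sob unfolding sobolev_def by blast
  have "AE x in lborel. g j x = (deriv ^^ j) F x"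
  proof (rule ident[OF gL[OF jk]])
    show "continuous_on UNIV ((deriv ^^ j) F)" by (rule smooth_cont[OF smooth_higher[OF F]])
    fix \<phi> :: "real \<Rightarrow> real" assume \<phi>: "test_fun \<phi>"
    show "(LINT x|lborel. g j x * \<phi> x) = (LINT x|lborel. (deriv ^^ j) F x * \<phi> x)"
      using gi[OF jk \<phi>] ibp[OF F \<phi>, of j] by simp
  qed
  then have ae: "AE x in lborel. (g j x)^2 = ((deriv ^^ j) F x)^2" by eventually_elim simp
  have m: "(deriv ^^ j) F \<in> borel_measurable lborel" by (rule smooth_meas[OF smooth_higher[OF F]])
  have "integrable lborel (\<lambda>x. (g j x)^2)" using gL[OF jk] unfolding L2_def by blast
  then have "integrable lborel (\<lambda>x. ((deriv ^^ j) F x)^2)"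
    by (rule integrable_cong_AE_imp[OF _ _ ae]) (use m in measurable)
  then show ?thesis unfolding L2_def using m by blast
qed

lemma L2_add: assumes "L2 f" "L2 g" shows "L2 (\<lambda>x. f x + g x)"
proof -
  have m: "f \<in> borel_measurable lborel" "g \<in> borel_measurable lborel" using assms unfolding L2_def by auto
  have "integrable lborel (\<lambda>x. 2 * (f x)^2 + 2 * (g x)^2)" using assms unfolding L2_def by auto
  then have "integrable lborel (\<lambda>x. (f x + g x)^2)"
  proof (rule Bochner_Integration.integrable_bound)
    show "(\<lambda>x. (f x + g x)^2) \<in> borel_measurable lborel" using m by measurable
    show "AE x in lborel. norm ((f x + g x)\<^sup>2) \<le> norm (2 * (f x)\<^sup>2 + 2 * (g x)\<^sup>2)"
    proof (rule AE_I2)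
      fix x have "0 \<le> (f x - g x)^2" by simp
      then have "2 * f x * g x \<le> (f x)\<^sup>2 + (g x)\<^sup>2" by (simp add: power2_diff)
      moreover have "0 \<le> (f x + g x)^2" by simp
      ultimately show "norm ((f x + g x)\<^sup>2) \<le> norm (2 * (f x)\<^sup>2 + 2 * (g x)\<^sup>2)"
        by (simp add: power2_sum)
    qed
  qed
  then show ?thesis unfolding L2_def using m by auto
qed

lemma L2_bmult: assumes "L2 f" "u \<in> borel_measurable lborel" "\<And>x. \<bar>u x\<bar> \<le> M" shows "L2 (\<lambda>x. u x * f x)"
proof -
  have m: "f \<in> borel_measurable lborel" using assms unfolding L2_def by auto
  have "integrable lborel (\<lambda>x. M^2 * (f x)^2)" using assms unfolding L2_def by auto
  then have "integrable lborel (\<lambda>x. (u x * f x)^2)"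
  proof (rule Bochner_Integration.integrable_bound)
    show "(\<lambda>x. (u x * f x)^2) \<in> borel_measurable lborel" using m assms(2) by measurable
    show "AE x in lborel. norm ((u x * f x)\<^sup>2) \<le> norm (M^2 * (f x)\<^sup>2)"
    proof (rule AE_I2)
      fix x
      have "\<bar>u x\<bar>^2 \<le> M^2" by (rule power_mono[OF assms(3) abs_ge_zero])
      then have "(u x)^2 \<le> M^2" by simp
      then have "(u x)^2 * (f x)^2 \<le> M^2 * (f x)^2" by (rule mult_right_mono) simp
      then show "norm ((u x * f x)\<^sup>2) \<le> norm (M^2 * (f x)\<^sup>2)" by (simp add: power_mult_distrib)
    qed
  qed
  then show ?thesis unfolding L2_def using m assms(2) by auto
qed

lemma L2_sum: "finite A \<Longrightarrow> (\<And>i. i \<in> A \<Longrightarrow> L2 (f i)) \<Longrightarrow> L2 (\<lambda>x. \<Sum>i\<in>A. f i x)"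
proof (induction A rule: finite_induct)
  case empty
  then show ?case unfolding L2_def by simp
next
  case (insert a A)
  then show ?case by (simp add: L2_add)
qed

lemma L2_neg: "L2 f \<Longrightarrow> L2 (\<lambda>x. - f x)" unfolding L2_def by (simp add: borel_measurable_uminus)

lemma L2_diff: "L2 f \<Longrightarrow> L2 g \<Longrightarrow> L2 (\<lambda>x. f x - g x)"
  using L2_add[of f "\<lambda>x. - g x"] L2_neg by simp



lemma L2_bounded:
  assumes F: "smooth F" and L0: "L2 F" and L1: "L2 (deriv F)"
  shows "\<exists>M. \<forall>x. \<bar>F x\<bar> \<le> M"
proof -
  define G where "G = (\<lambda>x. (F x)^2 + (deriv F x)^2)"
  have Gi: "integrable lborel G" using L0 L1 unfolding L2_def G_def by auto
  have Gnn: "G x \<ge> 0" for x unfolding G_def by simp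
  define I where "I = (LINT x|lborel. G x)"
  have Gc: "continuous_on UNIV G" unfolding G_def
    by (intro continuous_intros smooth_cont F smooth_deriv)
  have Gle: "integral {a..b} G \<le> I" for a b
  proof -
    have si: "set_integrable lborel {a..b} G" unfolding set_integrable_def
      using Gi by (intro integrable_mult_indicator) auto
    have "integral {a..b} G = (LINT x:{a..b}|lborel. G x)" by (rule set_borel_integral_eq_integral(2)[symmetric, OF si])
    also have "\<dots> \<le> I" unfolding I_def set_lebesgue_integral_def
      using si Gi Gnn unfolding set_integrable_def by (intro integral_mono) (auto simp: indicator_def)
    finally show ?thesis .
  qed
  have dF2: "((\<lambda>x. (F x)^2) has_real_derivative 2 * F x * deriv F x) (at x)" for x
    using DERIV_mult[OF smooth_has_deriv[OF F] smooth_has_deriv[OF F], of x] by (simp add: power2_eq_square mult.assoc)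
  have ftc: "((\<lambda>t. 2 * F t * deriv F t) has_integral (F b)^2 - (F a)^2) {a..b}" if "a \<le> b" for a b
    using that by (intro fundamental_theorem_of_calculus)
      (auto intro!: has_vector_derivative_at_within dF2[unfolded has_real_derivative_iff_has_vector_derivative])
  have pw: "\<bar>2 * F t * deriv F t\<bar> \<le> G t" for t
  proof -
    have "0 \<le> (\<bar>F t\<bar> - \<bar>deriv F t\<bar>)^2" by simp
    then show ?thesis unfolding G_def by (simp add: power2_diff abs_mult)
  qed
  have bnd: "\<bar>(F b)^2 - (F a)^2\<bar> \<le> I" if "a \<le> b" for a b
  proof -
    have "(F b)^2 - (F a)^2 = integral {a..b} (\<lambda>t. 2 * F t * deriv F t)" using ftc[OF that] by (simp add: integral_unique)
    moreover have "norm (integral {a..b} (\<lambda>t. 2 * F t * deriv F t)) \<le> integral {a..b} G"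
    proof (rule integral_norm_bound_integral)
      show "(\<lambda>t. 2 * F t * deriv F t) integrable_on {a..b}" using ftc[OF that] by blast
      show "G integrable_on {a..b}" by (rule integrable_continuous_interval[OF continuous_on_subset[OF Gc]]) simp
    qed (use pw in simp)
    ultimately show ?thesis using Gle[of a b] by simp
  qed
  have "(F x)^2 \<le> (F 0)^2 + I" for x
  proof (cases "0 \<le> x")
    case True then show ?thesis using bnd[of 0 x] by simp
  next
    case False then show ?thesis using bnd[of x 0] by simp
  qed
  then have "\<bar>F x\<bar> \<le> sqrt ((F 0)^2 + I)" for x
    by (metis real_sqrt_abs real_sqrt_le_mono)
  then show ?thesis by blast
qed

lemma higher_deriv_diff_real:
  assumes "smooth f" "smooth g"
  shows "(deriv ^^ n) (\<lambda>x. f x - g x) = (\<lambda>x. (deriv ^^ n) f x - (deriv ^^ n) g x)"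
proof -
  have "((\<lambda>x. (deriv ^^ n) f x - (deriv ^^ n) g x) has_real_derivative (deriv ^^ Suc n) f x - (deriv ^^ Suc n) g x) (at x)" for n x
    using assms by (intro DERIV_diff smooth_higher_has_deriv)
  from chain_higher[of "\<lambda>n x. (deriv ^^ n) f x - (deriv ^^ n) g x", OF this] show ?thesis by simp
qed

lemma sob_psi:
  fixes C S :: "real \<Rightarrow> real"
  assumes smC: "smooth C" and smS: "smooth S" and sob: "\<forall>k. sobolev k C \<and> sobolev k (deriv S)"
    and ss: "\<And>x. (C x)^2 + (S x)^2 = 1"
  shows "sobolev k (\<lambda>x. C x * deriv S x - S x * deriv C x)"
proof -
  define T where "T = deriv S"
  have smT: "smooth T" unfolding T_def by (rule smooth_deriv[OF smS])
  have smC': "smooth (deriv C)" by (rule smooth_deriv[OF smC])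
  have LC: "L2 ((deriv ^^ j) C)" for j using weak_classical[OF smC, of j j] sob by blast
  have LT: "L2 ((deriv ^^ j) T)" for j using weak_classical[OF smT, of j j] sob unfolding T_def by blast
  have BC: "\<exists>M. \<forall>x. \<bar>(deriv ^^ j) C x\<bar> \<le> M" for j
    using L2_bounded[OF smooth_higher[OF smC] LC[of j]] LC[of "Suc j"] by simp
  have BT: "\<exists>M. \<forall>x. \<bar>(deriv ^^ j) T x\<bar> \<le> M" for j
    using L2_bounded[OF smooth_higher[OF smT] LT[of j]] LT[of "Suc j"] by simp
  have BS: "\<exists>M. \<forall>x. \<bar>(deriv ^^ j) S x\<bar> \<le> M" for j
  proof (cases j)
    case 0
    have "\<bar>S x\<bar> \<le> 1" for x
    proof -
      have "0 \<le> (C x)^2" by simp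
      then have "(S x)^2 \<le> 1" using ss[of x] by linarith
      then show ?thesis by (simp add: abs_square_le_1)
    qed
    then show ?thesis using 0 by auto
  next
    case (Suc i)
    then show ?thesis using BT[of i] unfolding T_def by (simp only: deriv_funpow_Suc)
  qed
  define \<psi> where "\<psi> = (\<lambda>x. C x * T x - S x * deriv C x)"
  have smpsi: "smooth \<psi>" unfolding \<psi>_def by (intro smooth_diff smooth_mult smC smT smS smC')
  have Lpsi: "L2 ((deriv ^^ n) \<psi>)" for n
  proof -
    have e: "(deriv ^^ n) \<psi> = (\<lambda>x. (\<Sum>i = 0..n. real (n choose i) * (deriv ^^ i) C x * (deriv ^^ (n-i)) T x)
                                 - (\<Sum>i = 0..n. real (n choose i) * (deriv ^^ i) S x * (deriv ^^ (n-i)) (deriv C) x))"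
      unfolding \<psi>_def
      by (simp add: higher_deriv_diff_real smooth_mult smC smT smS smC' higher_deriv_mult_real fun_eq_iff)
    have L1: "L2 (\<lambda>x. \<Sum>i = 0..n. real (n choose i) * (deriv ^^ i) C x * (deriv ^^ (n-i)) T x)"
    proof (rule L2_sum)
      fix i
      obtain M where M: "\<forall>x. \<bar>(deriv ^^ i) C x\<bar> \<le> M" using BC by blast
      have "L2 (\<lambda>x. (real (n choose i) * (deriv ^^ i) C x) * (deriv ^^ (n-i)) T x)"
      proof (rule L2_bmult[OF LT])
        show "(\<lambda>x. real (n choose i) * (deriv ^^ i) C x) \<in> borel_measurable lborel"
          using smooth_meas[OF smooth_higher[OF smC, of i]] by measurable
        fix x show "\<bar>real (n choose i) * (deriv ^^ i) C x\<bar> \<le> real (n choose i) * M"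
          using M by (simp add: abs_mult mult_left_mono)
      qed
      then show "L2 (\<lambda>x. real (n choose i) * (deriv ^^ i) C x * (deriv ^^ (n-i)) T x)" by simp
    qed simp
    have L2': "L2 (\<lambda>x. \<Sum>i = 0..n. real (n choose i) * (deriv ^^ i) S x * (deriv ^^ (n-i)) (deriv C) x)"
    proof (rule L2_sum)
      fix i
      obtain M where M: "\<forall>x. \<bar>(deriv ^^ i) S x\<bar> \<le> M" using BS by blast
      have LC': "L2 ((deriv ^^ (n-i)) (deriv C))" using LC[of "Suc (n-i)"] by (simp only: deriv_funpow_Suc)
      have "L2 (\<lambda>x. (real (n choose i) * (deriv ^^ i) S x) * (deriv ^^ (n-i)) (deriv C) x)"
      proof (rule L2_bmult[OF LC'])
        show "(\<lambda>x. real (n choose i) * (deriv ^^ i) S x) \<in> borel_measurable lborel"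
          using smooth_meas[OF smooth_higher[OF smS, of i]] by measurable
        fix x show "\<bar>real (n choose i) * (deriv ^^ i) S x\<bar> \<le> real (n choose i) * M"
          using M by (simp add: abs_mult mult_left_mono)
      qed
      then show "L2 (\<lambda>x. real (n choose i) * (deriv ^^ i) S x * (deriv ^^ (n-i)) (deriv C) x)" by simp
    qed simp
    show ?thesis unfolding e by (rule L2_diff[OF L1 L2'])
  qed
  have "sobolev k \<psi>"
    unfolding sobolev_def
  proof (intro exI[of _ "\<lambda>j. (deriv ^^ j) \<psi>"] conjI allI impI)
    show "AE x in lborel. (deriv ^^ 0) \<psi> x = \<psi> x" by simp
    fix j \<phi> assume "j \<le> k" "test_fun \<phi>"
    show "(LINT x|lborel. (deriv ^^ j) \<psi> x * \<phi> x) = (-1)^j * (LINT x|lborel. \<psi> x * (deriv ^^ j) \<phi> x)"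
      by (rule ibp[OF smpsi \<open>test_fun \<phi>\<close>])
  qed (use Lpsi in auto)
  then show ?thesis unfolding \<psi>_def T_def .
qed



lemma mono_deriv_nonneg:
  fixes f :: "real \<Rightarrow> real"
  assumes mono: "\<And>x y. x \<le> y \<Longrightarrow> f x \<le> f y" and d: "(f has_real_derivative D) (at x)"
  shows "D \<ge> 0"
proof -
  have "((\<lambda>h. (f (x + h) - f x) / h) \<longlongrightarrow> D) (at 0)" using d DERIV_def by blast
  then have t: "((\<lambda>h. (f (x + h) - f x) / h) \<longlongrightarrow> D) (at_right 0)"
    by (rule tendsto_mono[OF at_within_le_at])
  have "eventually (\<lambda>h. 0 \<le> (f (x + h) - f x) / h) (at_right 0)"
    unfolding eventually_at_filter by (rule always_eventually) (auto intro!: divide_nonneg_pos mono)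
  from tendsto_lowerbound[OF t this] show ?thesis by simp
qed

theorem lemma2:
  fixes \<kappa> \<epsilon> :: real and m :: "real \<Rightarrow> real \<times> real" and \<theta> :: "real \<Rightarrow> real"
  assumes kappa_pos: "\<kappa> > 0" and eps_pos: "\<epsilon> > 0"
    and neel: "neel_wall \<kappa> \<epsilon> m"
    and theta_cont: "continuous_on UNIV \<theta>"
    and theta0: "\<theta> 0 = 0"
    and theta_m: "\<forall>x. m x = (cos (\<theta> x), sin (\<theta> x))"
    \<comment> \<open>standing facts from the literature\<close>
    and m_smooth: "smooth (\<lambda>x. fst (m x)) \<and> smooth (\<lambda>x. snd (m x))"
    and m_sobolev: "\<forall>k. sobolev k (\<lambda>x. fst (m x)) \<and> sobolev k (deriv (\<lambda>x. snd (m x)))"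
    and m1_nonneg: "\<forall>x. fst (m x) \<ge> 0"
    and m1_sym_decr: "(\<forall>x. fst (m (- x)) = fst (m x)) \<and>
                      (\<forall>x y. 0 \<le> x \<and> x \<le> y \<longrightarrow> fst (m y) \<le> fst (m x))"
    and theta_EL: "\<exists>h. S_op \<epsilon> (\<lambda>x. cos (\<theta> x)) h \<and>
        (\<forall>x. \<kappa> * deriv (deriv \<theta>) x + sin (2 * \<theta> x) / 2
              + (1 / \<epsilon>) * Re (h x) * sin (\<theta> x) = 0)"
  shows "smooth \<theta> \<and>
         (\<theta> 0 = 0 \<and> (\<forall>x. deriv \<theta> x \<ge> 0) \<and> deriv \<theta> 0 > 0) \<and>
         (\<forall>k. sobolev k (deriv \<theta>) \<and> sobolev k (\<lambda>x. cos (\<theta> x))) \<and>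
         ((\<forall>x. - (pi / 2) \<le> \<theta> x \<and> \<theta> x \<le> pi / 2) \<and>
          (\<theta> \<longlongrightarrow> pi / 2) at_top \<and> (\<theta> \<longlongrightarrow> - (pi / 2)) at_bot)"
proof -
  define C where "C = (\<lambda>x. cos (\<theta> x))"
  define S where "S = (\<lambda>x. sin (\<theta> x))"
  have fstm: "(\<lambda>x. fst (m x)) = C" and sndm: "(\<lambda>x. snd (m x)) = S"
    using theta_m by (auto simp: C_def S_def)
  obtain d where adm: "admissible m d" using neel unfolding neel_wall_def by blast
  have limS: "(S \<longlongrightarrow> 1) at_top" "(S \<longlongrightarrow> -1) at_bot"
    using adm sndm unfolding admissible_def by auto
  have smC: "smooth C" and smS: "smooth S" using m_smooth fstm sndm by auto
  have cpos: "cos (\<theta> x) \<ge> 0" for x using m1_nonneg theta_m by (metis fst_conv)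
  have rng: "- (pi/2) \<le> \<theta> x \<and> \<theta> x \<le> pi/2" for x
    by (rule range_half_pi[OF theta_cont theta0 cpos])
  define \<psi> where "\<psi> = (\<lambda>x. C x * deriv S x - S x * deriv C x)"
  have dth: "(\<theta> has_real_derivative \<psi> x) (at x)" for x
    using theta_deriv[OF theta_cont rng smC[unfolded C_def] smS[unfolded S_def]] unfolding \<psi>_def C_def S_def .
  have derivth: "deriv \<theta> = \<psi>" using dth DERIV_imp_deriv by blast
  have smpsi: "smooth \<psi>" unfolding \<psi>_def
    by (intro smooth_diff smooth_mult smC smS smooth_deriv)
  have smth: "smooth \<theta>" by (rule smooth_from_deriv[OF dth smpsi])
  have anti: "cos (\<theta> y) \<le> cos (\<theta> x)" if "0 \<le> x" "x \<le> y" for x y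
    using m1_sym_decr that theta_m by (metis fst_conv)
  have limsin: "((\<lambda>x. sin (\<theta> x)) \<longlongrightarrow> 1) at_top" using limS(1) unfolding S_def .
  note hm = half_mono[OF theta_cont theta0 rng anti limsin]
  define \<theta>' where "\<theta>' = (\<lambda>x. - \<theta> (- x))"
  have cont': "continuous_on UNIV \<theta>'" unfolding \<theta>'_def
    by (intro continuous_intros continuous_on_compose2[OF theta_cont]) auto
  have rng': "- (pi/2) \<le> \<theta>' x \<and> \<theta>' x \<le> pi/2" for x unfolding \<theta>'_def using rng[of "-x"] by auto
  have cos': "cos (\<theta>' x) = cos (\<theta> x)" for x
    unfolding \<theta>'_def using m1_sym_decr theta_m by (metis cos_minus fst_conv)
  have anti': "cos (\<theta>' y) \<le> cos (\<theta>' x)" if "0 \<le> x" "x \<le> y" for x y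
    using anti[OF that] cos' by simp
  have limsin': "((\<lambda>x. sin (\<theta>' x)) \<longlongrightarrow> 1) at_top"
  proof -
    have "((\<lambda>x. S (- x)) \<longlongrightarrow> -1) at_top" using limS(2) filterlim_at_bot_mirror by blast
    then have "((\<lambda>x. - S (- x)) \<longlongrightarrow> 1) at_top" using tendsto_minus by fastforce
    then show ?thesis unfolding \<theta>'_def S_def by simp
  qed
  note hm' = half_mono[OF cont' _ rng' anti' limsin'] 
  have th'0: "\<theta>' 0 = 0" unfolding \<theta>'_def using theta0 by simp
  have mono: "\<theta> x \<le> \<theta> y" if "x \<le> y" for x y
  proof -
    consider "0 \<le> x" | "y \<le> 0" | "x < 0" "0 < y" by linarith
    then show ?thesis
    proof cases
      case 1 then show ?thesis using hm(2) that by blast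
    next
      case 2
      have "\<theta>' (- y) \<le> \<theta>' (- x)" using hm'(2)[OF th'0, of "-y" "-x"] 2 that by simp
      then show ?thesis unfolding \<theta>'_def by simp
    next
      case 3
      have "0 \<le> \<theta>' (- x)" using hm'(1)[OF th'0, of "-x"] 3 by simp
      then show ?thesis using hm(1)[of y] 3 unfolding \<theta>'_def by simp
    qed
  qed
  have dnn: "deriv \<theta> x \<ge> 0" for x using mono_deriv_nonneg[OF mono dth] derivth by simp
  have limtop: "(\<theta> \<longlongrightarrow> pi / 2) at_top"
  proof (rule order_tendstoI)
    fix a :: real assume a: "a < pi/2"
    define a' where "a' = max a (- (pi/2))"
    have "sin a' < sin (pi/2)" unfolding a'_def using a pi_gt_zero by (intro sin_monotone_2pi) (auto simp: max_def)
    then have "sin a' < 1" by simp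
    then have "eventually (\<lambda>x. sin a' < sin (\<theta> x)) at_top" using limsin order_tendstoD(1) by blast
    then show "eventually (\<lambda>x. a < \<theta> x) at_top"
    proof (rule eventually_mono)
      fix x assume "sin a' < sin (\<theta> x)"
      then have "a' < \<theta> x" using sin_mono_less_eq[of a' "\<theta> x"] rng[of x] a unfolding a'_def by auto
      then show "a < \<theta> x" unfolding a'_def by simp
    qed
  next
    fix a :: real assume "pi/2 < a"
    then show "eventually (\<lambda>x. \<theta> x < a) at_top"
    proof (intro always_eventually allI)
      fix x show "\<theta> x < a" using rng[of x] \<open>pi/2 < a\<close> by linarith
    qed
  qed
  have limbot: "(\<theta> \<longlongrightarrow> - (pi / 2)) at_bot"
  proof (rule order_tendstoI)
    fix a :: real assume a: "- (pi/2) < a"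
    define a' where "a' = min a (pi/2)"
    have "sin (- (pi/2)) < sin a'" unfolding a'_def using a pi_gt_zero by (intro sin_monotone_2pi) (auto simp: min_def)
    then have "-1 < sin a'" by simp
    then have "eventually (\<lambda>x. sin (\<theta> x) < sin a') at_bot" using limS(2) order_tendstoD(2) unfolding S_def by blast
    then show "eventually (\<lambda>x. \<theta> x < a) at_bot"
    proof (rule eventually_mono)
      fix x assume "sin (\<theta> x) < sin a'"
      then have "\<theta> x < a'" using sin_mono_less_eq[of "\<theta> x" a'] rng[of x] a unfolding a'_def by auto
      then show "\<theta> x < a" unfolding a'_def by simp
    qed
  next
    fix a :: real assume "a < - (pi/2)"
    then show "eventually (\<lambda>x. a < \<theta> x) at_bot"
    proof (intro always_eventually allI)
      fix x show "a < \<theta> x" using rng[of x] \<open>a < - (pi/2)\<close> by linarith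
    qed
  qed
  obtain h where hS: "S_op \<epsilon> (\<lambda>x. cos (\<theta> x)) h" and EL: "\<And>x. \<kappa> * deriv (deriv \<theta>) x + sin (2 * \<theta> x) / 2
              + (1 / \<epsilon>) * Re (h x) * sin (\<theta> x) = 0" using theta_EL by blast
  have hL: "L2c h" using hS unfolding S_op_def fourier_L2_def by blast
  have dpos: "deriv \<theta> 0 > 0"
  proof (rule ccontr)
    assume "\<not> deriv \<theta> 0 > 0"
    then have d0: "deriv \<theta> 0 = 0" using dnn[of 0] by simp
    define Z where "Z = {x. 0 \<le> x \<and> \<theta> x = 0}"
    obtain X where X: "\<And>x. x \<ge> X \<Longrightarrow> \<theta> x > 0"
      using order_tendstoD(1)[OF limtop, of 0] unfolding eventually_at_top_linorder by auto
    have Zb: "bdd_above Z"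
      unfolding bdd_above_def
    proof (intro exI[of _ X] ballI)
      fix x assume "x \<in> Z"
      then have "\<theta> x = 0" unfolding Z_def by simp
      then show "x \<le> X" using X[of x] by force
    qed
    have Zne: "Z \<noteq> {}" using theta0 unfolding Z_def by auto
    have Zc: "closed Z"
    proof -
      have "Z = {0..} \<inter> \<theta> -` {0}" unfolding Z_def by auto
      then show ?thesis using theta_cont by (auto intro!: closed_Int closed_vimage)
    qed
    define b where "b = Sup Z"
    have bZ: "b \<in> Z" unfolding b_def by (rule closed_contains_Sup[OF Zne Zb Zc])
    then have b: "0 \<le> b" "\<theta> b = 0" unfolding Z_def by auto
    have db: "deriv \<theta> b = 0"
    proof (cases "b = 0")
      case True then show ?thesis using d0 by simp
    next
      case False
      then have "b > 0" using b by simp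
      have "\<forall>y. \<bar>b - y\<bar> < b \<longrightarrow> \<theta> b \<le> \<theta> y" using b hm(1) by auto
      from DERIV_local_min[OF dth \<open>b > 0\<close> this] show ?thesis using derivth by simp
    qed
    obtain \<delta> where dl: "\<delta> > 0" "\<forall>t\<in>{b..b+\<delta>}. \<theta> t = 0"
      using gronwall_zero[OF smth kappa_pos eps_pos hL EL b(2) db] by blast
    then have "b + \<delta> \<in> Z" using b unfolding Z_def by auto
    then have "b + \<delta> \<le> b" unfolding b_def using Zb by (rule cSup_upper)
    then show False using dl by simp
  qed
  have sob: "sobolev k (deriv \<theta>) \<and> sobolev k (\<lambda>x. cos (\<theta> x))" for k
  proof
    have "\<forall>k. sobolev k C \<and> sobolev k (deriv S)" using m_sobolev fstm sndm by simp
    then show "sobolev k (deriv \<theta>)" unfolding derivth \<psi>_def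
      using sob_psi[OF smC smS] C_def S_def by simp
    show "sobolev k (\<lambda>x. cos (\<theta> x))" using m_sobolev fstm C_def by metis
  qed
  show ?thesis using smth theta0 dnn dpos sob rng limtop limbot by blast
qed


end
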